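(* Let $d\ge2$ and let $c:V_d\to\ell^\infty(V_d/V_{[0,1/d)})$ be defined by $c(v)=(v-1)\chi_X=\chi_{v\cdot X}-\chi_X$. Then (i) $c(v)\in\ell^2(V_d/V_{[0,1/d)})$ for every $v\in V_d$, and (ii) $c:V_d\to\ell^2(V_d/V_{[0,1/d)})$ is a proper 1-cocycle for the quasi-regular representation of $V_d$ on $\ell^2(V_d/V_{[0,1/d)})$. In particular $V_d$, and therefore also $F_d$ and $T_d$, have the Haagerup property.
   Context: $V_d$ is the Higman–Thompson group of bijections of $[0,1)$ that are piecewise affine on finitely many half-open intervals with endpoints in $\mathbb Z[1/d]$, with slopes powers of $d$; $T_d\le V_d$ consists of those inducing homeomorphisms of the circle $[0,1]/(0\sim1)$ and $F_d\le T_d$ of those inducing homeomorphisms of $[0,1]$. $V_{[0,1/d)}$ is the subgroup of elements acting as the identity on $[0,1/d)$. A standard $d$-adic interval has endpoints $a/d^k,(a+1)/d^k$ with integers $k\ge0$, $0\le a\le d^k-1$; a map $g$ on such an interval $I$ is standard affine if it is affine and $g(I)$ is a standard $d$-adic interval. $X=\{gV_{[0,1/d)}: g\text{ is standard affine on }[0,1/d)\}\subseteq V_d/V_{[0,1/d)}$, and $V_d$ acts on functions on $V_d/V_{[0,1/d)}$ by left translation. A 1-cocycle satisfies $c(v_1v_2)=v_1c(v_2)+c(v_1)$; it is proper if $\{v:\|c(v)\|_2\le r\}$ is finite for every $r$. *)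

theory Defs
  imports "HOL-Analysis.Analysis"
begin

definition dadic :: "nat \<Rightarrow> real \<Rightarrow> bool" where
  "dadic d x \<longleftrightarrow> (\<exists>(a::int) (k::nat). x = real_of_int a / real d ^ k)"

text \<open>Higman--Thompson group \<open>V_d\<close>: bijections of [0,1), extended by the identity
  outside [0,1) (so that each element is a unique function real => real), which are
  piecewise affine on finitely many half-open intervals [p_i, p_(i+1)) with
  d-adic breakpoints, slopes integer powers of d, and d-adic translation parts
  (equivalently: d-adic images of breakpoints).\<close>
definition Vd :: "nat \<Rightarrow> (real \<Rightarrow> real) set" where
  "Vd d = {f. bij_betw f {0..<1} {0..<1} \<and> (\<forall>x. x \<notin> {0..<1} \<longrightarrow> f x = x) \<and>
     (\<exists>ps :: real list. length ps \<ge> 2 \<and> sorted_wrt (<) ps \<and> hd ps = 0 \<and> last ps = 1 \<and>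
        (\<forall>p \<in> set ps. dadic d p) \<and>
        (\<forall>i < length ps - 1. \<exists>(k::int) b. dadic d b \<and>
            (\<forall>x \<in> {ps ! i ..< ps ! (i+1)}. f x = real d powi k * x + b)))}"

definition Td :: "nat \<Rightarrow> (real \<Rightarrow> real) set" where
  "Td d = {f \<in> Vd d. \<exists>h h'. homeomorphism (sphere (0::complex) 1) (sphere 0 1) h h' \<and>
      (\<forall>x \<in> {0..<1}. h (cis (2 * pi * x)) = cis (2 * pi * f x))}"

definition Fd :: "nat \<Rightarrow> (real \<Rightarrow> real) set" where
  "Fd d = {f \<in> Vd d. \<exists>h h'. homeomorphism {0..1::real} {0..1} h h' \<and>
      (\<forall>x \<in> {0..<1}. h x = f x)}"

definition Vsub :: "nat \<Rightarrow> (real \<Rightarrow> real) set" where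
  "Vsub d = {f \<in> Vd d. \<forall>x \<in> {0..<1/real d}. f x = x}"

definition coset :: "nat \<Rightarrow> (real \<Rightarrow> real) \<Rightarrow> (real \<Rightarrow> real) set" where
  "coset d g = (\<lambda>h. g \<circ> h) ` Vsub d"

definition Quot :: "nat \<Rightarrow> (real \<Rightarrow> real) set set" where
  "Quot d = coset d ` Vd d"

definition act :: "(real \<Rightarrow> real) \<Rightarrow> (real \<Rightarrow> real) set \<Rightarrow> (real \<Rightarrow> real) set" where
  "act v C = (\<lambda>g. v \<circ> g) ` C"

definition qreg :: "(real \<Rightarrow> real) \<Rightarrow> ((real \<Rightarrow> real) set \<Rightarrow> real) \<Rightarrow> ((real \<Rightarrow> real) set \<Rightarrow> real)" where
  "qreg v \<phi> = (\<lambda>C. \<phi> (act (inv v) C))"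

definition std_interval :: "nat \<Rightarrow> real set \<Rightarrow> bool" where
  "std_interval d J \<longleftrightarrow> (\<exists>(k::nat) (a::int). 0 \<le> a \<and> a \<le> int d ^ k - 1 \<and>
      J = {real_of_int a / real d ^ k ..< (real_of_int a + 1) / real d ^ k})"

definition std_affine :: "nat \<Rightarrow> (real \<Rightarrow> real) \<Rightarrow> real set \<Rightarrow> bool" where
  "std_affine d g I \<longleftrightarrow> (\<exists>m b. \<forall>x \<in> I. g x = m * x + b) \<and> std_interval d (g ` I)"

definition Xset :: "nat \<Rightarrow> (real \<Rightarrow> real) set set" where
  "Xset d = {coset d g | g. g \<in> Vd d \<and> std_affine d g {0..<1/real d}}"

definition cocyc :: "nat \<Rightarrow> (real \<Rightarrow> real) \<Rightarrow> (real \<Rightarrow> real) set \<Rightarrow> real" where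
  "cocyc d v = (\<lambda>C. indicator (act v ` Xset d) C - indicator (Xset d) C)"

definition in_l2 :: "nat \<Rightarrow> ((real \<Rightarrow> real) set \<Rightarrow> real) \<Rightarrow> bool" where
  "in_l2 d \<phi> \<longleftrightarrow> (\<forall>C. C \<notin> Quot d \<longrightarrow> \<phi> C = 0) \<and> (\<lambda>C. (\<phi> C)\<^sup>2) summable_on Quot d"

definition l2norm :: "nat \<Rightarrow> ((real \<Rightarrow> real) set \<Rightarrow> real) \<Rightarrow> real" where
  "l2norm d \<phi> = sqrt (infsum (\<lambda>C. (\<phi> C)\<^sup>2) (Quot d))"

end

theory Submission
  imports Defs
begin


definition sint :: "nat \<Rightarrow> nat \<Rightarrow> int \<Rightarrow> real set" where
  "sint d n a = {real_of_int a / real d ^ n ..< (real_of_int a + 1) / real d ^ n}"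

lemma frac_less_iff:
  assumes "d > 0" "k \<le> n"
  shows "real_of_int p / real d ^ n < real_of_int q / real d ^ k \<longleftrightarrow> p < q * int d ^ (n - k)"
proof -
  have e: "real d ^ n = real d ^ k * real d ^ (n - k)" using assms by (simp add: power_add[symmetric])
  have "real_of_int p / real d ^ n < real_of_int q / real d ^ k \<longleftrightarrow> real_of_int p < real_of_int q * real d ^ (n - k)"
    using assms unfolding e by (simp add: field_simps)
  also have "\<dots> \<longleftrightarrow> p < q * int d ^ (n - k)"
    by (metis of_int_less_iff of_int_mult of_int_of_nat_eq of_int_power)
  finally show ?thesis .
qed

lemma frac_le_iff:
  assumes "d > 0" "k \<le> n"
  shows "real_of_int p / real d ^ n \<le> real_of_int q / real d ^ k \<longleftrightarrow> p \<le> q * int d ^ (n - k)"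
proof -
  have e: "real d ^ n = real d ^ k * real d ^ (n - k)" using assms by (simp add: power_add[symmetric])
  have "real_of_int p / real d ^ n \<le> real_of_int q / real d ^ k \<longleftrightarrow> real_of_int p \<le> real_of_int q * real d ^ (n - k)"
    using assms unfolding e by (simp add: field_simps)
  also have "\<dots> \<longleftrightarrow> p \<le> q * int d ^ (n - k)"
    by (metis of_int_le_iff of_int_mult of_int_of_nat_eq of_int_power)
  finally show ?thesis .
qed

lemma frac_le_iff2:
  assumes "d > 0" "k \<le> n"
  shows "real_of_int q / real d ^ k \<le> real_of_int p / real d ^ n \<longleftrightarrow> q * int d ^ (n - k) \<le> p"
  using frac_less_iff[OF assms, of p q] by (meson not_less)

lemma frac_less_iff2:
  assumes "d > 0" "k \<le> n"
  shows "real_of_int q / real d ^ k < real_of_int p / real d ^ n \<longleftrightarrow> q * int d ^ (n - k) < p"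
  using frac_le_iff[OF assms, of p q] by (meson not_less)

lemma sint_nested:
  assumes "d > 0" "m \<le> n" "y \<in> sint d n b" "y \<in> sint d m c"
  shows "sint d n b \<subseteq> sint d m c"
proof -
  from assms have "real_of_int b / real d ^ n < real_of_int (c+1) / real d ^ m"
    unfolding sint_def by auto
  hence "b < (c+1) * int d ^ (n - m)" using frac_less_iff assms by blast
  hence "b + 1 \<le> (c+1) * int d ^ (n - m)" by simp
  hence 1: "real_of_int (b+1) / real d ^ n \<le> real_of_int (c+1) / real d ^ m" using frac_le_iff assms by blast
  from assms have "real_of_int c / real d ^ m < real_of_int (b+1) / real d ^ n"
    unfolding sint_def by auto
  hence "c * int d ^ (n - m) < b + 1" using frac_less_iff2 assms by blast
  hence "c * int d ^ (n - m) \<le> b" by simp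
  hence 2: "real_of_int c / real d ^ m \<le> real_of_int b / real d ^ n" using frac_le_iff2 assms by blast
  show ?thesis using 1 2 unfolding sint_def by auto
qed

lemma sint_left: "d > 0 \<Longrightarrow> real_of_int a / real d ^ n \<in> sint d n a"
  unfolding sint_def by (auto simp: divide_strict_right_mono)

lemma sint_mid: "d > 0 \<Longrightarrow> real_of_int a / real d ^ n + 1 / (2 * real d ^ n) \<in> sint d n a"
  unfolding sint_def by (auto simp: field_simps)

lemma sint_inj:
  assumes "d \<ge> 2" "sint d n a = sint d m b"
  shows "n = m \<and> a = b"
proof -
  have p: "real d ^ n > 0" "real d ^ m > 0" using assms by auto
  have "real_of_int a / real d ^ n < (real_of_int a + 1) / real d ^ n"
       "real_of_int b / real d ^ m < (real_of_int b + 1) / real d ^ m" using p by (auto simp: divide_strict_right_mono)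
  from atLeastLessThan_inj[OF assms(2)[unfolded sint_def] this]
  have e1: "real_of_int a / real d ^ n = real_of_int b / real d ^ m"
   and e2: "(real_of_int a + 1) / real d ^ n = (real_of_int b + 1) / real d ^ m" by auto
  from e1 e2 have "1 / real d ^ n = 1 / real d ^ m" by (simp add: add_divide_distrib)
  hence "real d ^ n = real d ^ m" by simp
  hence "n = m" using assms(1) by (metis of_nat_eq_iff of_nat_power power_inject_exp Suc_1 Suc_le_lessD)
  with e1 p assms(1) show ?thesis by simp
qed

lemma sint_point:
  assumes "d > 0" "0 \<le> x" "x < 1"
  shows "x \<in> sint d n \<lfloor>x * real d ^ n\<rfloor>" "0 \<le> \<lfloor>x * real d ^ n\<rfloor>" "\<lfloor>x * real d ^ n\<rfloor> < int d ^ n"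
proof -
  have p: "real d ^ n > 0" using assms by auto
  have "real_of_int \<lfloor>x * real d ^ n\<rfloor> \<le> x * real d ^ n" "x * real d ^ n < real_of_int \<lfloor>x * real d ^ n\<rfloor> + 1"
    by linarith+
  thus "x \<in> sint d n \<lfloor>x * real d ^ n\<rfloor>" unfolding sint_def using p
    by (simp add: divide_le_eq less_divide_eq)
  show "0 \<le> \<lfloor>x * real d ^ n\<rfloor>" using assms p by auto
  have "x * real d ^ n < real d ^ n" using assms p by simp
  hence "\<lfloor>x * real d ^ n\<rfloor> < real d ^ n" by linarith
  thus "\<lfloor>x * real d ^ n\<rfloor> < int d ^ n"
    by (metis of_int_less_iff of_int_of_nat_eq of_int_power)
qed

lemma sint_sub01:
  assumes "d > 0" "0 \<le> a" "a < int d ^ n"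
  shows "sint d n a \<subseteq> {0..<1}"
proof -
  have p: "real d ^ n > 0" using assms by auto
  have "a + 1 \<le> int d ^ n" using assms by simp
  hence "real_of_int a + 1 \<le> real d ^ n" by (metis of_int_add of_int_le_iff of_int_of_nat_eq of_int_power of_int_1)
  moreover have "real_of_int a \<ge> 0" using assms by simp
  ultimately show ?thesis using p unfolding sint_def by (auto simp: divide_le_eq less_divide_eq)
qed

lemma sint_valid:
  assumes "d > 0" "x \<in> sint d n a" "0 \<le> x" "x < 1"
  shows "0 \<le> a" "a < int d ^ n"
proof -
  have p: "real d ^ n > 0" using assms by auto
  from assms have 1: "real_of_int a \<le> x * real d ^ n" "x * real d ^ n < real_of_int a + 1" unfolding sint_def
    using p by (auto simp: divide_le_eq less_divide_eq)
  have "x * real d ^ n < real d ^ n" "x * real d ^ n \<ge> 0" using assms p by simp_all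
  with 1 have "real_of_int a < real d ^ n" "real_of_int a > -1" by linarith+
  thus "0 \<le> a" "a < int d ^ n" by (simp, metis of_int_less_iff of_int_of_nat_eq of_int_power)
qed


definition valid :: "nat \<Rightarrow> nat \<Rightarrow> int \<Rightarrow> bool" where
  "valid d n a \<longleftrightarrow> 0 \<le> a \<and> a < int d ^ n"

definition SA :: "nat \<Rightarrow> (real \<Rightarrow> real) \<Rightarrow> nat \<Rightarrow> int \<Rightarrow> nat \<Rightarrow> int \<Rightarrow> bool" where
  "SA d f n a n' a' \<longleftrightarrow> (\<forall>x\<in>sint d n a. f x = real_of_int a' / real d ^ n' + (x - real_of_int a / real d ^ n) * (real d ^ n / real d ^ n'))"

lemma SA_image:
  assumes "d > 0" "SA d f n a n' a'"
  shows "f ` sint d n a = sint d n' a'"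
proof -
  define s where "s = real d ^ n / real d ^ n'"
  have s: "s > 0" using assms by (simp add: s_def)
  have p: "real d ^ n > 0" "real d ^ n' > 0" using assms by auto
  have f: "\<And>x. x \<in> sint d n a \<Longrightarrow> f x = real_of_int a' / real d ^ n' + (x - real_of_int a / real d ^ n) * s"
    using assms unfolding SA_def s_def by auto
  show ?thesis
  proof
    show "f ` sint d n a \<subseteq> sint d n' a'"
    proof
      fix y assume "y \<in> f ` sint d n a"
      then obtain x where x: "x \<in> sint d n a" "y = f x" by auto
      have "0 \<le> x - real_of_int a / real d ^ n" "x - real_of_int a / real d ^ n < 1 / real d ^ n"
        using x unfolding sint_def by (auto simp: add_divide_distrib)
      hence "0 \<le> (x - real_of_int a / real d ^ n) * s" "(x - real_of_int a / real d ^ n) * s < 1 / real d ^ n * s"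
        using s by (simp, intro mult_strict_right_mono, auto)
      moreover have "1 / real d ^ n * s = 1 / real d ^ n'" using p assms(1) by (simp add: s_def)
      ultimately have "0 \<le> (x - real_of_int a / real d ^ n) * s" "(x - real_of_int a / real d ^ n) * s < 1 / real d ^ n'"
        by auto
      thus "y \<in> sint d n' a'" unfolding sint_def using x f by (auto simp: add_divide_distrib)
    qed
  next
    show "sint d n' a' \<subseteq> f ` sint d n a"
    proof
      fix y assume y: "y \<in> sint d n' a'"
      define x where "x = real_of_int a / real d ^ n + (y - real_of_int a' / real d ^ n') / s"
      have "0 \<le> y - real_of_int a' / real d ^ n'" "y - real_of_int a' / real d ^ n' < 1 / real d ^ n'"
        using y unfolding sint_def by (auto simp: add_divide_distrib)
      hence "0 \<le> (y - real_of_int a' / real d ^ n') / s" "(y - real_of_int a' / real d ^ n') / s < 1 / real d ^ n' / s"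
        using s by (simp, metis divide_divide_eq_left divide_strict_right_mono)
      moreover have "1 / real d ^ n' / s = 1 / real d ^ n" using p assms(1) by (simp add: s_def)
      ultimately have "0 \<le> (y - real_of_int a' / real d ^ n') / s" "(y - real_of_int a' / real d ^ n') / s < 1 / real d ^ n"
        by auto
      hence xs: "x \<in> sint d n a" unfolding sint_def x_def by (auto simp: add_divide_distrib)
      have "f x = y" using f[OF xs] s unfolding x_def by simp
      thus "y \<in> f ` sint d n a" using xs by blast
    qed
  qed
qed

lemma std_interval_iff: "std_interval d J \<longleftrightarrow> (\<exists>k a. valid d k a \<and> J = sint d k a)"
  unfolding std_interval_def valid_def sint_def by force

lemma affine_rearr: "(u::real) = p + (x - q) * m \<Longrightarrow> u = m * x + (p - q * m)"
  by (simp add: algebra_simps)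

lemma SA_std_affine:
  assumes "d > 0" "SA d f n a n' a'" "valid d n' a'"
  shows "std_affine d f (sint d n a)"
  unfolding std_affine_def
proof
  show "\<exists>m b. \<forall>x\<in>sint d n a. f x = m * x + b"
  proof (intro exI ballI)
    fix x assume "x \<in> sint d n a"
    hence "f x = real_of_int a' / real d ^ n' + (x - real_of_int a / real d ^ n) * (real d ^ n / real d ^ n')"
      using assms(2) unfolding SA_def by blast
    thus "f x = real d ^ n / real d ^ n' * x + (real_of_int a' / real d ^ n' - real_of_int a / real d ^ n * (real d ^ n / real d ^ n'))"
      by (rule affine_rearr)
  qed
  show "std_interval d (f ` sint d n a)"
    unfolding std_interval_iff using SA_image[OF assms(1,2)] assms(3) by blast
qed

lemma SA_sub:
  assumes "d > 0" "SA d f n a n' a'" "sint d (n+j) c \<subseteq> sint d n a"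
  shows "SA d f (n+j) c (n'+j) (a' * int d ^ j + c - a * int d ^ j)"
  unfolding SA_def
proof
  fix x assume x: "x \<in> sint d (n+j) c"
  hence fx: "f x = real_of_int a' / real d ^ n' + (x - real_of_int a / real d ^ n) * (real d ^ n / real d ^ n')"
    using assms unfolding SA_def by auto
  have p: "real d ^ n > 0" "real d ^ n' > 0" "real d ^ j > 0" using assms by auto
  show "f x = real_of_int (a' * int d ^ j + c - a * int d ^ j) / real d ^ (n'+j) +
     (x - real_of_int c / real d ^ (n+j)) * (real d ^ (n+j) / real d ^ (n'+j))"
    unfolding fx using p by (simp add: power_add field_simps)
qed

lemma SA_valid:
  assumes "d > 0" "SA d f n a n' a'" "valid d n a" "f ` {0..<1} \<subseteq> {0..<1}"
  shows "valid d n' a'"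
proof -
  have "real_of_int a / real d ^ n \<in> sint d n a" using sint_left assms by auto
  moreover have "sint d n a \<subseteq> {0..<1}" using sint_sub01 assms unfolding valid_def by auto
  ultimately have "f (real_of_int a / real d ^ n) \<in> {0..<1}" using assms(4) by (meson image_subset_iff subsetD)
  moreover have "f (real_of_int a / real d ^ n) = real_of_int a' / real d ^ n'"
    using assms(2) \<open>real_of_int a / real d ^ n \<in> sint d n a\<close> unfolding SA_def by auto
  ultimately show ?thesis using sint_valid[OF assms(1) sint_left[OF assms(1)]] unfolding valid_def by auto
qed


lemma std_affine_SA:
  assumes d: "d > 0" and sa: "std_affine d f (sint d n a)"
  shows "\<exists>n' a'. valid d n' a' \<and> SA d f n a n' a'"
proof -
  obtain m b where fm: "\<And>x. x \<in> sint d n a \<Longrightarrow> f x = m * x + b"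
    using sa unfolding std_affine_def by blast
  obtain k c where v: "valid d k c" and im: "f ` sint d n a = sint d k c"
    using sa unfolding std_affine_def std_interval_iff by blast
  define A where "A = real_of_int a / real d ^ n"
  define h where "h = 1 / real d ^ n"
  define L where "L = real_of_int c / real d ^ k"
  define H where "H = 1 / real d ^ k"
  have hp: "h > 0" "H > 0" using d by (auto simp: h_def H_def)
  have J: "sint d n a = {A..<A+h}" unfolding sint_def A_def h_def by (simp add: add_divide_distrib)
  have K: "sint d k c = {L..<L+H}" unfolding sint_def L_def H_def by (simp add: add_divide_distrib)
  have imJ: "\<And>x. A \<le> x \<Longrightarrow> x < A + h \<Longrightarrow> L \<le> m * x + b \<and> m * x + b < L + H"
  proof -
    fix x assume "A \<le> x" "x < A + h"
    hence "x \<in> sint d n a" using J by auto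
    hence "f x \<in> sint d k c" using im by blast
    thus "L \<le> m * x + b \<and> m * x + b < L + H" using fm \<open>x \<in> sint d n a\<close> K by auto
  qed
  have surjJ: "\<And>y. L \<le> y \<Longrightarrow> y < L + H \<Longrightarrow> \<exists>x. A \<le> x \<and> x < A + h \<and> y = m * x + b"
  proof -
    fix y assume "L \<le> y" "y < L + H"
    hence "y \<in> f ` sint d n a" using im K by auto
    then obtain x where "x \<in> sint d n a" "y = f x" by auto
    thus "\<exists>x. A \<le> x \<and> x < A + h \<and> y = m * x + b" using fm J by auto
  qed
  obtain x0 where x0: "A \<le> x0" "x0 < A + h" "L = m * x0 + b" using surjJ[of L] hp by auto
  have mpos: "m > 0"
  proof (rule ccontr)
    assume "\<not> m > 0"
    define x1 where "x1 = (x0 + A + h) / 2"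
    have x1: "A \<le> x1" "x1 < A + h" "x0 < x1" using x0 by (auto simp: x1_def)
    have "m * x1 \<le> m * x0" using \<open>\<not> m > 0\<close> x1 by (intro mult_left_mono_neg) auto
    moreover have "L \<le> m * x1 + b" using imJ x1 by auto
    ultimately have "m * x1 = m * x0" using x0 by auto
    hence m0: "m = 0" using x1 by auto
    obtain x2 where "A \<le> x2" "x2 < A + h" "L + H/2 = m * x2 + b" using surjJ[of "L + H/2"] hp by auto
    thus False using m0 x0 hp by auto
  qed
  have x0A: "x0 = A"
  proof (rule ccontr)
    assume "x0 \<noteq> A"
    hence "m * A + b < L" using x0 mpos by auto
    thus False using imJ[of A] hp by auto
  qed
  have mh: "m * h = H"
  proof (rule ccontr)
    assume ne: "m * h \<noteq> H"
    show False
    proof (cases "m * h < H")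
      case True
      obtain x where x: "A \<le> x" "x < A + h" "L + m * h = m * x + b"
        using surjJ[of "L + m * h"] True mpos hp by auto
      hence "m * x = m * (A + h)" using x0 x0A by (simp add: algebra_simps)
      hence "x = A + h" using mpos by simp
      thus False using x by simp
    next
      case False
      hence "m * h > H" using ne by simp
      define x where "x = A + H / m"
      have "H / m < h" using \<open>m * h > H\<close> mpos by (simp add: divide_less_eq mult.commute)
      hence "A \<le> x" "x < A + h" using hp mpos by (auto simp: x_def)
      hence "m * x + b < L + H" using imJ by blast
      moreover have "m * x + b = L + H" using x0 x0A mpos by (simp add: x_def algebra_simps)
      ultimately show False by simp
    qed
  qed
  have mv: "m = real d ^ n / real d ^ k" using mh d by (simp add: h_def H_def field_simps)
  have "SA d f n a k c"
    unfolding SA_def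
  proof
    fix x assume "x \<in> sint d n a"
    hence "f x = m * x + b" using fm by auto
    also have "\<dots> = L + (x - A) * m" using x0 x0A by (simp add: algebra_simps)
    finally show "f x = real_of_int c / real d ^ k + (x - real_of_int a / real d ^ n) * (real d ^ n / real d ^ k)"
      using mv by (simp add: L_def A_def)
  qed
  thus ?thesis using v by blast
qed


definition U :: "nat \<Rightarrow> (real \<Rightarrow> real) \<Rightarrow> bool" where
  "U d f \<longleftrightarrow> (\<forall>N. \<exists>L. \<forall>n\<ge>L. \<forall>a. valid d n a \<longrightarrow> (\<exists>n' a'. n' \<ge> N \<and> valid d n' a' \<and> SA d f n a n' a'))"

definition bij0 :: "(real \<Rightarrow> real) \<Rightarrow> bool" where
  "bij0 f \<longleftrightarrow> bij_betw f {0..<1} {0..<1} \<and> (\<forall>x. x \<notin> {0..<1} \<longrightarrow> f x = x)"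

lemma Vd_bij0: "f \<in> Vd d \<Longrightarrow> bij0 f"
  unfolding Vd_def bij0_def by auto

lemma bij0_maps: "bij0 f \<Longrightarrow> f ` {0..<1} \<subseteq> {0..<1}"
  unfolding bij0_def bij_betw_def by auto

lemma U_imp_Vd:
  assumes d: "d \<ge> 2" and b: "bij0 f" and u: "U d f"
  shows "f \<in> Vd d"
proof -
  have d0: "d > 0" using d by simp
  obtain L where L: "\<And>n a. n \<ge> L \<Longrightarrow> valid d n a \<Longrightarrow> \<exists>n' a'. valid d n' a' \<and> SA d f n a n' a'"
    using u unfolding U_def by (metis le0)
  define G where "G = d ^ L"
  have G1: "G \<ge> 1" using d0 by (simp add: G_def)
  define ps where "ps = map (\<lambda>i. real i / real d ^ L) [0..<G+1]"
  have len: "length ps = G + 1" by (simp add: ps_def)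
  have nth: "\<And>i. i < G + 1 \<Longrightarrow> ps ! i = real i / real d ^ L" by (simp add: ps_def del: upt_Suc)
  have p: "real d ^ L > 0" using d0 by simp
  have sorted: "sorted_wrt (<) ps"
    unfolding sorted_wrt_iff_nth_less len using nth p by (auto simp: divide_strict_right_mono)
  have hd: "hd ps = 0" using nth[of 0] by (simp add: hd_conv_nth ps_def del: upt_Suc)
  have last: "last ps = 1" using nth[of G] len p by (simp add: last_conv_nth ps_def G_def del: upt_Suc)
  have dad: "\<forall>p \<in> set ps. dadic d p"
    unfolding ps_def dadic_def by (auto intro!: exI[of _ L]) (metis of_int_of_nat_eq)+
  have pieces: "\<forall>i < length ps - 1. \<exists>(k::int) b. dadic d b \<and>
            (\<forall>x \<in> {ps ! i ..< ps ! (i+1)}. f x = real d powi k * x + b)"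
  proof (intro allI impI)
    fix i assume i: "i < length ps - 1"
    hence iG: "i < G" using len by simp
    have e: "{ps ! i ..< ps ! (i+1)} = sint d L (int i)"
      using iG nth[of i] nth[of "i+1"] unfolding sint_def by (simp add: add.commute)
    have "valid d L (int i)" using iG unfolding valid_def G_def by (simp add: of_nat_less_iff[symmetric] del: of_nat_less_iff)
    then obtain n' a' where "valid d n' a'" "SA d f L (int i) n' a'" using L by blast
    hence fx: "\<forall>x\<in>sint d L (int i). f x = real d ^ L / real d ^ n' * x + (real_of_int a' / real d ^ n' - real_of_int (int i) / real d ^ L * (real d ^ L / real d ^ n'))"
      unfolding SA_def using affine_rearr by blast
    have k: "real d powi (int L - int n') = real d ^ L / real d ^ n'"
      using d0 by (simp add: power_int_diff)
    have b: "real_of_int a' / real d ^ n' - real_of_int (int i) / real d ^ L * (real d ^ L / real d ^ n')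
         = real_of_int (a' - int i) / real d ^ n'" using p by (simp add: field_simps diff_divide_distrib)
    show "\<exists>(k::int) b. dadic d b \<and> (\<forall>x \<in> {ps ! i ..< ps ! (i+1)}. f x = real d powi k * x + b)"
      apply (rule exI[of _ "int L - int n'"], rule exI[of _ "real_of_int (a' - int i) / real d ^ n'"])
      using fx unfolding e k b dadic_def by blast
  qed
  have "2 \<le> length ps" using len G1 by simp
  thus ?thesis unfolding Vd_def using b[unfolded bij0_def] sorted hd last dad pieces by blast
qed


lemma ev_bound:
  assumes "finite S" "\<forall>s\<in>S. \<exists>L::nat. \<forall>n\<ge>L. P s n"
  shows "\<exists>L. \<forall>n\<ge>L. \<forall>s\<in>S. P s n"
  using assms
proof (induction S rule: finite_induct)
  case empty thus ?case by auto
next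
  case (insert x F)
  then obtain L1 where "\<forall>n\<ge>L1. \<forall>s\<in>F. P s n" by auto
  moreover obtain L2 where "\<forall>n\<ge>L2. P x n" using insert by auto
  ultimately show ?case by (intro exI[of _ "max L1 L2"]) auto
qed

lemma dadic_level:
  assumes "d > 0" "dadic d p"
  shows "\<exists>Q. \<forall>n\<ge>Q. \<exists>y::int. p = real_of_int y / real d ^ n"
proof -
  obtain a k where p: "p = real_of_int a / real d ^ k" using assms unfolding dadic_def by blast
  show ?thesis
  proof (intro exI[of _ k] allI impI)
    fix n assume "k \<le> n"
    then obtain j where n: "n = k + j" using le_Suc_ex by blast
    have "p = real_of_int (a * int d ^ j) / real d ^ n" using assms unfolding p n by (simp add: power_add)
    thus "\<exists>y::int. p = real_of_int y / real d ^ n" by blast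
  qed
qed

lemma piece_lemma:
  assumes d: "d \<ge> 2" and b: "bij0 f" and db: "dadic d b" and fP: "\<forall>x\<in>P. f x = real d powi k * x + b"
  shows "\<exists>L. \<forall>n\<ge>L. \<forall>a. valid d n a \<and> sint d n a \<subseteq> P \<longrightarrow> (\<exists>n' a'. n' \<ge> N \<and> valid d n' a' \<and> SA d f n a n' a')"
proof -
  have d0: "d > 0" using d by simp
  obtain z e where bz: "b = real_of_int z / real d ^ e" using db unfolding dadic_def by blast
  show ?thesis
  proof (rule exI[of _ "N + e + nat \<bar>k\<bar>"], intro allI impI)
    fix n a assume n: "N + e + nat \<bar>k\<bar> \<le> n" and va: "valid d n a \<and> sint d n a \<subseteq> P"
    define n' where "n' = nat (int n - k)"
    have n'1: "int n' = int n - k" "n' \<ge> N" "n' \<ge> e" using n by (auto simp: n'_def)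
    then obtain j where j: "n' = j + e" using le_Suc_ex by (metis add.commute)
    have pw: "real d powi k = real d ^ n / real d ^ n'"
    proof -
      have "k = int n - int n'" using n'1 by simp
      thus ?thesis using d0 by (simp add: power_int_diff)
    qed
    define a' where "a' = a + z * int d ^ j"
    have p: "real d ^ n > 0" "real d ^ n' > 0" "real d ^ e > 0" "real d ^ j > 0" using d0 by auto
    have SA: "SA d f n a n' a'"
      unfolding SA_def
    proof
      fix x assume "x \<in> sint d n a"
      hence fx: "f x = real d ^ n / real d ^ n' * x + real_of_int z / real d ^ e" using va fP pw bz by auto
      have e1: "real_of_int a' / real d ^ n' = real_of_int a / real d ^ n' + real_of_int z / real d ^ e"
        using p unfolding a'_def j by (simp add: power_add add_divide_distrib)
      have e2: "(x - real_of_int a / real d ^ n) * (real d ^ n / real d ^ n') = real d ^ n / real d ^ n' * x - real_of_int a / real d ^ n'"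
        using p d0 by (simp add: field_simps)
      show "f x = real_of_int a' / real d ^ n' + (x - real_of_int a / real d ^ n) * (real d ^ n / real d ^ n')"
        using fx e1 e2 by linarith
    qed
    have "valid d n' a'" using SA_valid[OF d0 SA _ bij0_maps[OF b]] va by blast
    thus "\<exists>n' a'. n' \<ge> N \<and> valid d n' a' \<and> SA d f n a n' a'" using SA n'1 by blast
  qed
qed

lemma find_piece:
  fixes ps :: "real list"
  assumes "length ps \<ge> 2" "sorted_wrt (<) ps" "hd ps = 0" "last ps = 1" "0 \<le> x" "x < 1"
  shows "\<exists>i < length ps - 1. ps ! i \<le> x \<and> x < ps ! (i+1)"
proof -
  have ne: "ps \<noteq> []" using assms by auto
  have h0: "ps ! 0 = 0" using assms ne by (simp add: hd_conv_nth)
  have l1: "ps ! (length ps - 1) = 1" using assms ne by (simp add: last_conv_nth)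
  define Q where "Q = (\<lambda>j. j < length ps \<and> ps ! j \<le> x)"
  have Q0: "Q 0" using h0 assms ne by (simp add: Q_def)
  have Qb: "\<And>j. Q j \<Longrightarrow> j \<le> length ps" by (simp add: Q_def)
  define i where "i = Greatest Q"
  have Qi: "Q i" using GreatestI_nat[of Q 0 "length ps", OF Q0 Qb] i_def by simp
  have imax: "\<And>j. Q j \<Longrightarrow> j \<le> i" using Greatest_le_nat[of Q _ "length ps", OF _ Qb] i_def by simp
  have "i \<noteq> length ps - 1" using Qi l1 assms(6) unfolding Q_def by auto
  hence i: "i < length ps - 1" using Qi unfolding Q_def by auto
  have "\<not> Q (i+1)" using imax[of "i+1"] by linarith
  hence "x < ps ! (i+1)" using i unfolding Q_def by auto
  thus ?thesis using i Qi unfolding Q_def by auto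
qed

lemma Vd_imp_U:
  assumes d: "d \<ge> 2" and f: "f \<in> Vd d"
  shows "U d f"
  unfolding U_def
proof
  fix N
  have d0: "d > 0" using d by simp
  have b: "bij0 f" using f by (rule Vd_bij0)
  obtain ps :: "real list" where ps: "length ps \<ge> 2" "sorted_wrt (<) ps" "hd ps = 0" "last ps = 1"
    "\<forall>p \<in> set ps. dadic d p"
    "\<forall>i < length ps - 1. \<exists>(k::int) b. dadic d b \<and> (\<forall>x \<in> {ps ! i ..< ps ! (i+1)}. f x = real d powi k * x + b)"
    using f unfolding Vd_def by blast
  have ev1: "\<forall>i\<in>{..<length ps - 1}. \<exists>L. \<forall>n\<ge>L. \<forall>a. valid d n a \<and> sint d n a \<subseteq> {ps ! i ..< ps ! (i+1)} \<longrightarrow>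
     (\<exists>n' a'. n' \<ge> N \<and> valid d n' a' \<and> SA d f n a n' a')"
  proof
    fix i assume "i \<in> {..<length ps - 1}"
    hence "i < length ps - 1" by simp
    then obtain k bb where "dadic d bb" "\<forall>x \<in> {ps ! i ..< ps ! (i+1)}. f x = real d powi k * x + bb"
      using ps(6) by blast
    thus "\<exists>L. \<forall>n\<ge>L. \<forall>a. valid d n a \<and> sint d n a \<subseteq> {ps ! i ..< ps ! (i+1)} \<longrightarrow>
     (\<exists>n' a'. n' \<ge> N \<and> valid d n' a' \<and> SA d f n a n' a')"
      using piece_lemma[OF d b] by blast
  qed
  obtain L1 where L1: "\<forall>n\<ge>L1. \<forall>i\<in>{..<length ps - 1}. \<forall>a. valid d n a \<and> sint d n a \<subseteq> {ps ! i ..< ps ! (i+1)} \<longrightarrow>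
     (\<exists>n' a'. n' \<ge> N \<and> valid d n' a' \<and> SA d f n a n' a')"
    using ev_bound[OF finite_lessThan ev1] by blast
  have ev2: "\<forall>p\<in>set ps. \<exists>Q. \<forall>n\<ge>Q. \<exists>y::int. p = real_of_int y / real d ^ n"
    using dadic_level[OF d0] ps(5) by blast
  obtain L2 where L2: "\<forall>n\<ge>L2. \<forall>p\<in>set ps. \<exists>y::int. p = real_of_int y / real d ^ n"
    using ev_bound[OF finite_set ev2] by blast
  show "\<exists>L. \<forall>n\<ge>L. \<forall>a. valid d n a \<longrightarrow> (\<exists>n' a'. n' \<ge> N \<and> valid d n' a' \<and> SA d f n a n' a')"
  proof (rule exI[of _ "max L1 L2"], intro allI impI)
    fix n a assume n: "max L1 L2 \<le> n" and va: "valid d n a"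
    define x0 where "x0 = real_of_int a / real d ^ n"
    have "x0 \<in> sint d n a" unfolding x0_def using sint_left d0 by blast
    moreover have "sint d n a \<subseteq> {0..<1}" using sint_sub01[OF d0, of a n] va unfolding valid_def by auto
    ultimately have x01: "0 \<le> x0" "x0 < 1" by auto
    obtain i where i: "i < length ps - 1" "ps ! i \<le> x0" "x0 < ps ! (i+1)" using find_piece[OF ps(1-4) x01] by blast
    have "ps ! (i+1) \<in> set ps" using i by simp
    moreover have "n \<ge> L2" using n by simp
    ultimately obtain y where y: "ps ! (i+1) = real_of_int y / real d ^ n" using L2 by blast
    have "real_of_int a < real_of_int y" using i(3) y d0 unfolding x0_def by (simp add: divide_less_cancel)
    hence "a + 1 \<le> y" by simp
    hence "(real_of_int a + 1) / real d ^ n \<le> ps ! (i+1)" unfolding y using d0 by (simp add: divide_right_mono)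
    hence "sint d n a \<subseteq> {ps ! i ..< ps ! (i+1)}" using i(2) unfolding sint_def x0_def by auto
    moreover have "n \<ge> L1" using n by simp
    moreover have "i \<in> {..<length ps - 1}" using i by simp
    ultimately show "\<exists>n' a'. n' \<ge> N \<and> valid d n' a' \<and> SA d f n a n' a'" using L1 va by blast
  qed
qed


lemma bij0_bij: assumes "bij0 f" shows "bij f"
proof -
  have b: "bij_betw f {0..<1} {0..<1}" and o: "\<And>x. x \<notin> {0..<1} \<Longrightarrow> f x = x" using assms unfolding bij0_def by auto
  have "bij_betw f (- {0..<1}) (- {0..<1})"
  proof -
    have "bij_betw id (- {0..<1::real}) (- {0..<1})" by simp
    moreover have "\<And>x. x \<in> - {0..<1} \<Longrightarrow> id x = f x" using o by simp
    ultimately show ?thesis using bij_betw_cong by blast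
  qed
  hence "bij_betw f ({0..<1} \<union> - {0..<1}) ({0..<1} \<union> - {0..<1})"
    using b by (intro bij_betw_combine) auto
  thus ?thesis by simp
qed

lemma bij0_id: "bij0 id" unfolding bij0_def by auto

lemma bij0_comp: "bij0 f \<Longrightarrow> bij0 g \<Longrightarrow> bij0 (f \<circ> g)"
  unfolding bij0_def by (auto intro: bij_betw_trans)

lemma bij0_inv: assumes "bij0 f" shows "bij0 (inv f)"
proof -
  have bf: "bij f" using bij0_bij assms by blast
  have b: "bij_betw f {0..<1} {0..<1}" and o: "\<And>x. x \<notin> {0..<1} \<Longrightarrow> f x = x" using assms unfolding bij0_def by auto
  have "bij_betw (inv f) {0..<1} {0..<1}"
  proof -
    have "bij_betw (inv_into {0..<1} f) {0..<1} {0..<1}" using b by (rule bij_betw_inv_into)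
    moreover have "\<And>y. y \<in> {0..<1} \<Longrightarrow> inv_into {0..<1} f y = inv f y"
      using b bf by (metis bij_betw_inv_into_right bij_inv_eq_iff)
    ultimately show ?thesis using bij_betw_cong by blast
  qed
  moreover have "\<And>x. x \<notin> {0..<1} \<Longrightarrow> inv f x = x" using o bf by (metis bij_inv_eq_iff)
  ultimately show ?thesis unfolding bij0_def by auto
qed

lemma SA_comp:
  assumes d: "d > 0" and g: "SA d g n a n' a'" and f: "SA d f n' a' n'' a''"
  shows "SA d (f \<circ> g) n a n'' a''"
  unfolding SA_def
proof
  fix x assume x: "x \<in> sint d n a"
  have gx: "g x \<in> sint d n' a'" using SA_image[OF d g] x by blast
  have e1: "g x - real_of_int a' / real d ^ n' = (x - real_of_int a / real d ^ n) * (real d ^ n / real d ^ n')"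
    using g x unfolding SA_def by auto
  have "f (g x) = real_of_int a'' / real d ^ n'' + (g x - real_of_int a' / real d ^ n') * (real d ^ n' / real d ^ n'')"
    using f gx unfolding SA_def by auto
  also have "\<dots> = real_of_int a'' / real d ^ n'' + (x - real_of_int a / real d ^ n) * (real d ^ n / real d ^ n'')"
    unfolding e1 using d by simp
  finally show "(f \<circ> g) x = real_of_int a'' / real d ^ n'' + (x - real_of_int a / real d ^ n) * (real d ^ n / real d ^ n'')"
    by simp
qed

lemma SA_inv:
  assumes d: "d > 0" and f: "SA d f n a n' a'" and i: "inj f"
  shows "SA d (inv f) n' a' n a"
  unfolding SA_def
proof
  fix z assume z: "z \<in> sint d n' a'"
  then obtain w where w: "w \<in> sint d n a" "z = f w" using SA_image[OF d f] by blast
  have iz: "inv f z = w" using w i by simp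
  have "z = real_of_int a' / real d ^ n' + (w - real_of_int a / real d ^ n) * (real d ^ n / real d ^ n')"
    using f w unfolding SA_def by auto
  hence "(z - real_of_int a' / real d ^ n') * (real d ^ n' / real d ^ n) = (w - real_of_int a / real d ^ n)"
    using d by simp
  thus "inv f z = real_of_int a / real d ^ n + (z - real_of_int a' / real d ^ n') * (real d ^ n' / real d ^ n)"
    unfolding iz by simp
qed

lemma U_id: assumes "d > 0" shows "U d id"
  unfolding U_def
proof (intro allI)
  fix N
  show "\<exists>L. \<forall>n\<ge>L. \<forall>a. valid d n a \<longrightarrow> (\<exists>n' a'. n' \<ge> N \<and> valid d n' a' \<and> SA d id n a n' a')"
  proof (rule exI[of _ N], intro allI impI)
    fix n a assume "N \<le> n" "valid d n a"
    moreover have "SA d id n a n a" unfolding SA_def using assms by simp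
    ultimately show "\<exists>n' a'. n' \<ge> N \<and> valid d n' a' \<and> SA d id n a n' a'" by blast
  qed
qed

lemma U_comp:
  assumes d: "d > 0" and f: "U d f" and g: "U d g"
  shows "U d (f \<circ> g)"
  unfolding U_def
proof
  fix N
  obtain Lf where Lf: "\<forall>n\<ge>Lf. \<forall>a. valid d n a \<longrightarrow> (\<exists>n' a'. n' \<ge> N \<and> valid d n' a' \<and> SA d f n a n' a')"
    using f unfolding U_def by blast
  obtain Lg where Lg: "\<forall>n\<ge>Lg. \<forall>a. valid d n a \<longrightarrow> (\<exists>n' a'. n' \<ge> Lf \<and> valid d n' a' \<and> SA d g n a n' a')"
    using g unfolding U_def by blast
  show "\<exists>L. \<forall>n\<ge>L. \<forall>a. valid d n a \<longrightarrow> (\<exists>n' a'. n' \<ge> N \<and> valid d n' a' \<and> SA d (f \<circ> g) n a n' a')"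
  proof (rule exI[of _ Lg], intro allI impI)
    fix n a assume "Lg \<le> n" "valid d n a"
    then obtain n' a' where 1: "n' \<ge> Lf" "valid d n' a'" "SA d g n a n' a'" using Lg by blast
    then obtain n'' a'' where 2: "n'' \<ge> N" "valid d n'' a''" "SA d f n' a' n'' a''" using Lf by blast
    show "\<exists>n' a'. n' \<ge> N \<and> valid d n' a' \<and> SA d (f \<circ> g) n a n' a'"
      using 2 SA_comp[OF d 1(3) 2(3)] by blast
  qed
qed


lemma U_inv:
  assumes d: "d \<ge> 2" and f: "f \<in> Vd d"
  shows "U d (inv f)"
  unfolding U_def
proof
  fix N
  have d0: "d > 0" using d by simp
  have b0: "bij0 f" using f by (rule Vd_bij0)
  have bf: "bij f" using b0 by (rule bij0_bij)
  have bb: "bij_betw f {0..<1} {0..<1}" using b0 unfolding bij0_def by auto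
  have uf: "U d f" using Vd_imp_U[OF d f] .
  obtain L0 where L0: "\<forall>n\<ge>L0. \<forall>a. valid d n a \<longrightarrow> (\<exists>n' a'. n' \<ge> 0 \<and> valid d n' a' \<and> SA d f n a n' a')"
    using uf unfolding U_def by blast
  have ev: "\<forall>a\<in>{0..<int d ^ L0}. \<exists>M. \<forall>m\<ge>M. \<exists>n' a'. n' \<le> m \<and> valid d n' a' \<and> SA d f L0 a n' a'"
  proof
    fix a assume "a \<in> {0..<int d ^ L0}"
    hence "valid d L0 a" unfolding valid_def by auto
    then obtain n' a' where "valid d n' a'" "SA d f L0 a n' a'" using L0 by blast
    thus "\<exists>M. \<forall>m\<ge>M. \<exists>n' a'. n' \<le> m \<and> valid d n' a' \<and> SA d f L0 a n' a'" by blast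
  qed
  obtain M where M: "\<forall>m\<ge>M. \<forall>a\<in>{0..<int d ^ L0}. \<exists>n' a'. n' \<le> m \<and> valid d n' a' \<and> SA d f L0 a n' a'"
    using ev_bound[OF finite_atLeastLessThan_int ev] by blast
  show "\<exists>L. \<forall>n\<ge>L. \<forall>a. valid d n a \<longrightarrow> (\<exists>n' a'. n' \<ge> N \<and> valid d n' a' \<and> SA d (inv f) n a n' a')"
  proof (rule exI[of _ "M + N"], intro allI impI)
    fix n b assume n: "M + N \<le> n" and vb: "valid d n b"
    define y where "y = real_of_int b / real d ^ n"
    have yb: "y \<in> sint d n b" unfolding y_def using sint_left[OF d0] .
    moreover have "sint d n b \<subseteq> {0..<1}" using sint_sub01[OF d0, of b n] vb unfolding valid_def by auto
    ultimately have y01: "y \<in> {0..<1}" by auto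
    then obtain x where x: "x \<in> {0..<1}" "f x = y" using bb y01 unfolding bij_betw_def by (metis imageE)
    define a where "a = \<lfloor>x * real d ^ L0\<rfloor>"
    have xa: "x \<in> sint d L0 a" "a \<in> {0..<int d ^ L0}" using sint_point[OF d0, of x L0] x unfolding a_def by auto
    have "M \<le> M" by simp
    then obtain n' a' where na: "n' \<le> M" "valid d n' a'" "SA d f L0 a n' a'" using M xa(2) by blast
    have yn': "y \<in> sint d n' a'" using SA_image[OF d0 na(3)] xa(1) x(2) by blast
    have nn': "n' \<le> n" using n na by simp
    then obtain j where j: "n = n' + j" using le_Suc_ex by blast
    have sub: "sint d (n' + j) b \<subseteq> sint d n' a'" using sint_nested[OF d0 nn' yb yn'] j by simp
    have "SA d (inv f) n' a' L0 a" using SA_inv[OF d0 na(3)] bf bij_is_inj by blast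
    from SA_sub[OF d0 this sub]
    have SA: "SA d (inv f) n b (L0 + j) (a * int d ^ j + b - a' * int d ^ j)" using j by simp
    have "valid d (L0 + j) (a * int d ^ j + b - a' * int d ^ j)"
      using SA_valid[OF d0 SA vb bij0_maps[OF bij0_inv[OF b0]]] .
    moreover have "L0 + j \<ge> N" using j n na by simp
    ultimately show "\<exists>n' a'. n' \<ge> N \<and> valid d n' a' \<and> SA d (inv f) n b n' a'" using SA by blast
  qed
qed

lemma Vd_char:
  assumes "d \<ge> 2"
  shows "f \<in> Vd d \<longleftrightarrow> bij0 f \<and> U d f"
  using Vd_bij0 Vd_imp_U U_imp_Vd assms by blast

lemma id_Vd: "d \<ge> 2 \<Longrightarrow> id \<in> Vd d"
  using Vd_char bij0_id U_id by simp

lemma comp_Vd: "d \<ge> 2 \<Longrightarrow> f \<in> Vd d \<Longrightarrow> g \<in> Vd d \<Longrightarrow> f \<circ> g \<in> Vd d"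
  using Vd_char bij0_comp U_comp by simp

lemma inv_Vd: "d \<ge> 2 \<Longrightarrow> f \<in> Vd d \<Longrightarrow> inv f \<in> Vd d"
  using Vd_char bij0_inv U_inv Vd_bij0 by blast


lemma sint_disj:
  assumes "d > 0" "k \<noteq> k'"
  shows "sint d n k \<inter> sint d n k' = {}"
proof (rule ccontr)
  assume "sint d n k \<inter> sint d n k' \<noteq> {}"
  then obtain y where "y \<in> sint d n k" "y \<in> sint d n k'" by auto
  hence "sint d n k \<subseteq> sint d n k'" "sint d n k' \<subseteq> sint d n k" using sint_nested[OF assms(1)] by auto
  hence "sint d n k = sint d n k'" by auto
  hence "real_of_int k / real d ^ n = real_of_int k' / real d ^ n"
    using atLeastLessThan_inj(1)[of "real_of_int k / real d ^ n" "(real_of_int k + 1) / real d ^ n"]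
      assms(1) unfolding sint_def by (simp add: divide_strict_right_mono)
  thus False using assms by simp
qed

lemma ancestor:
  assumes "d > 0" "valid d m c" "n \<le> m"
  shows "\<exists>k. valid d n k \<and> sint d m c \<subseteq> sint d n k"
proof -
  define x where "x = real_of_int c / real d ^ m"
  have xm: "x \<in> sint d m c" unfolding x_def using sint_left assms by blast
  moreover have "sint d m c \<subseteq> {0..<1}" using sint_sub01[OF assms(1), of c m] assms unfolding valid_def by auto
  ultimately have x01: "0 \<le> x" "x < 1" by auto
  define k where "k = \<lfloor>x * real d ^ n\<rfloor>"
  have "x \<in> sint d n k" "valid d n k" using sint_point[OF assms(1) x01, of n] unfolding k_def valid_def by auto
  thus ?thesis using sint_nested[OF assms(1) assms(3) xm] by blast
qed

lemma U_pieces: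
  assumes d: "d \<ge> 2" and b: "bij0 f"
    and pc: "\<And>k. valid d n0 k \<Longrightarrow> \<exists>(kk::int) bb. dadic d bb \<and> (\<forall>x\<in>sint d n0 k. f x = real d powi kk * x + bb)"
  shows "U d f"
  unfolding U_def
proof
  fix N
  have d0: "d > 0" using d by simp
  have ev: "\<forall>k\<in>{0..<int d ^ n0}. \<exists>L. \<forall>n\<ge>L. \<forall>a. valid d n a \<and> sint d n a \<subseteq> sint d n0 k \<longrightarrow>
     (\<exists>n' a'. n' \<ge> N \<and> valid d n' a' \<and> SA d f n a n' a')"
  proof
    fix k assume "k \<in> {0..<int d ^ n0}"
    hence "valid d n0 k" unfolding valid_def by auto
    then obtain kk bb where "dadic d bb" "\<forall>x\<in>sint d n0 k. f x = real d powi kk * x + bb" using pc by blast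
    thus "\<exists>L. \<forall>n\<ge>L. \<forall>a. valid d n a \<and> sint d n a \<subseteq> sint d n0 k \<longrightarrow>
     (\<exists>n' a'. n' \<ge> N \<and> valid d n' a' \<and> SA d f n a n' a')"
      using piece_lemma[OF d b] by blast
  qed
  obtain L where L: "\<forall>n\<ge>L. \<forall>k\<in>{0..<int d ^ n0}. \<forall>a. valid d n a \<and> sint d n a \<subseteq> sint d n0 k \<longrightarrow>
     (\<exists>n' a'. n' \<ge> N \<and> valid d n' a' \<and> SA d f n a n' a')"
    using ev_bound[OF finite_atLeastLessThan_int ev] by blast
  show "\<exists>L. \<forall>n\<ge>L. \<forall>a. valid d n a \<longrightarrow> (\<exists>n' a'. n' \<ge> N \<and> valid d n' a' \<and> SA d f n a n' a')"
  proof (rule exI[of _ "max L n0"], intro allI impI)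
    fix n a assume n: "max L n0 \<le> n" and va: "valid d n a"
    obtain k where k: "valid d n0 k" "sint d n a \<subseteq> sint d n0 k" using ancestor[OF d0 va, of n0] n by auto
    have "k \<in> {0..<int d ^ n0}" using k unfolding valid_def by auto
    moreover have "n \<ge> L" using n by simp
    ultimately show "\<exists>n' a'. n' \<ge> N \<and> valid d n' a' \<and> SA d f n a n' a'" using L va k by blast
  qed
qed


definition tau :: "nat \<Rightarrow> nat \<Rightarrow> int \<Rightarrow> real \<Rightarrow> real" where
  "tau d n a x = (if x \<in> sint d n 0 then x + real_of_int a / real d ^ n
     else if x \<in> sint d n a then x - real_of_int a / real d ^ n else x)"

lemma tau_shift1: "x \<in> sint d n 0 \<Longrightarrow> x + real_of_int a / real d ^ n \<in> sint d n a"
  unfolding sint_def by (auto simp: add_divide_distrib)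

lemma tau_shift2: "x \<in> sint d n a \<Longrightarrow> x - real_of_int a / real d ^ n \<in> sint d n 0"
  unfolding sint_def by (auto simp: add_divide_distrib diff_divide_distrib)

lemma tau_tau:
  assumes "d > 0"
  shows "tau d n a (tau d n a x) = x"
proof (cases "x \<in> sint d n 0")
  case True
  define y where "y = x + real_of_int a / real d ^ n"
  have y: "y \<in> sint d n a" using tau_shift1[OF True] y_def by simp
  show ?thesis
  proof (cases "a = 0")
    case True thus ?thesis using \<open>x \<in> sint d n 0\<close> unfolding tau_def by simp
  next
    case False
    hence "y \<notin> sint d n 0" using y sint_disj[OF assms False] by auto
    thus ?thesis using \<open>x \<in> sint d n 0\<close> y unfolding tau_def y_def by simp
  qed
next
  case False
  show ?thesis
  proof (cases "x \<in> sint d n a")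
    case True
    have "x - real_of_int a / real d ^ n \<in> sint d n 0" using tau_shift2[OF True] .
    thus ?thesis using False True unfolding tau_def by simp
  next
    case F2: False
    thus ?thesis using False unfolding tau_def by simp
  qed
qed

lemma tau_bij0:
  assumes "d > 0" "valid d n a"
  shows "bij0 (tau d n a)"
proof -
  have "(0::int) < int d ^ n" using assms(1) by simp
  hence s0: "sint d n 0 \<subseteq> {0..<1}" "sint d n a \<subseteq> {0..<1}"
    using sint_sub01[OF assms(1), of 0 n] sint_sub01[OF assms(1), of a n] assms(2) unfolding valid_def by auto
  have maps: "tau d n a ` {0..<1} \<subseteq> {0..<1}"
  proof
    fix y assume "y \<in> tau d n a ` {0..<1}"
    then obtain x where x: "x \<in> {0..<1}" "y = tau d n a x" by auto
    show "y \<in> {0..<1}"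
      using x s0 tau_shift1[of x d n a] tau_shift2[of x d n a] unfolding tau_def by (auto split: if_splits)
  qed
  have "bij_betw (tau d n a) {0..<1} {0..<1}"
    by (rule bij_betw_byWitness[where f'="tau d n a"]) (use tau_tau[OF assms(1)] maps in auto)
  moreover have "\<forall>x. x \<notin> {0..<1} \<longrightarrow> tau d n a x = x" using s0 unfolding tau_def by auto
  ultimately show ?thesis unfolding bij0_def by auto
qed

lemma tau_Vd:
  assumes d: "d \<ge> 2" and v: "valid d n a"
  shows "tau d n a \<in> Vd d"
proof -
  have d0: "d > 0" using d by simp
  have b: "bij0 (tau d n a)" using tau_bij0[OF d0 v] .
  have "U d (tau d n a)"
  proof (rule U_pieces[OF d b, of n])
    fix k assume "valid d n k"
    show "\<exists>(kk::int) bb. dadic d bb \<and> (\<forall>x\<in>sint d n k. tau d n a x = real d powi kk * x + bb)"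
    proof (cases "k = 0")
      case True
      thus ?thesis unfolding tau_def dadic_def
        by (intro exI[of _ 0] exI[of _ "real_of_int a / real d ^ n"]) auto
    next
      case False
      show ?thesis
      proof (cases "k = a")
        case True
        have "\<forall>x\<in>sint d n k. tau d n a x = real d powi 0 * x + real_of_int (- a) / real d ^ n"
          using sint_disj[OF d0 False] True unfolding tau_def by auto
        thus ?thesis unfolding dadic_def by blast
      next
        case F2: False
        have "\<forall>x\<in>sint d n k. tau d n a x = real d powi 0 * x + real_of_int 0 / real d ^ 0"
          using sint_disj[OF d0 False] sint_disj[OF d0 F2] unfolding tau_def by auto
        thus ?thesis unfolding dadic_def by blast
      qed
    qed
  qed
  thus ?thesis using Vd_char[OF d] b by blast
qed


definition rho :: "real \<Rightarrow> real \<Rightarrow> real" where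
  "rho D x = (if x < 0 then x else if x < 1/D then x / D
     else if x < 2/D - 1/D/D then x - 1/D + 1/D/D
     else if x < 2/D then D * x - 2 + 2/D else x)"

definition rhoi :: "real \<Rightarrow> real \<Rightarrow> real" where
  "rhoi D y = (if y < 0 then y else if y < 1/D/D then D * y
     else if y < 1/D then y + 1/D - 1/D/D
     else if y < 2/D then (y + 2 - 2/D) / D else y)"

lemma rho_facts:
  fixes D :: real
  assumes "D \<ge> 2"
  shows "1/D/D < 1/D" "2/D \<le> 1" "0 < 1/D/D" "2/D - 1/D/D > 1/D"
proof -
  have Dp: "D > 0" using assms by simp
  have "1/D/D < 1/D/1" by (rule divide_strict_left_mono) (use assms Dp in auto)
  thus "1/D/D < 1/D" by simp
  show "2/D \<le> 1" using assms Dp by (simp add: divide_le_eq)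
  show "0 < 1/D/D" using Dp by simp
  show "2/D - 1/D/D > 1/D" using \<open>1/D/D < 1/D\<close> by (simp add: field_simps)
qed

lemma rho_c1: "x < 0 \<Longrightarrow> rho D x = x" unfolding rho_def by simp
lemma rho_c2: "\<not> x < 0 \<Longrightarrow> x < 1/D \<Longrightarrow> rho D x = x / D" unfolding rho_def by simp
lemma rho_c3: "\<not> x < 0 \<Longrightarrow> \<not> x < 1/D \<Longrightarrow> x < 2/D - 1/D/D \<Longrightarrow> rho D x = x - 1/D + 1/D/D" unfolding rho_def by simp
lemma rho_c4: "\<not> x < 0 \<Longrightarrow> \<not> x < 1/D \<Longrightarrow> \<not> x < 2/D - 1/D/D \<Longrightarrow> x < 2/D \<Longrightarrow> rho D x = D * x - 2 + 2/D" unfolding rho_def by simp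
lemma rho_c5: "\<not> x < 0 \<Longrightarrow> \<not> x < 1/D \<Longrightarrow> \<not> x < 2/D - 1/D/D \<Longrightarrow> \<not> x < 2/D \<Longrightarrow> rho D x = x" unfolding rho_def by simp
lemma rhoi_c1: "y < 0 \<Longrightarrow> rhoi D y = y" unfolding rhoi_def by simp
lemma rhoi_c2: "\<not> y < 0 \<Longrightarrow> y < 1/D/D \<Longrightarrow> rhoi D y = D * y" unfolding rhoi_def by simp
lemma rhoi_c3: "\<not> y < 0 \<Longrightarrow> \<not> y < 1/D/D \<Longrightarrow> y < 1/D \<Longrightarrow> rhoi D y = y + 1/D - 1/D/D" unfolding rhoi_def by simp
lemma rhoi_c4: "\<not> y < 0 \<Longrightarrow> \<not> y < 1/D/D \<Longrightarrow> \<not> y < 1/D \<Longrightarrow> y < 2/D \<Longrightarrow> rhoi D y = (y + 2 - 2/D) / D" unfolding rhoi_def by simp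
lemma rhoi_c5: "\<not> y < 0 \<Longrightarrow> \<not> y < 1/D/D \<Longrightarrow> \<not> y < 1/D \<Longrightarrow> \<not> y < 2/D \<Longrightarrow> rhoi D y = y" unfolding rhoi_def by simp

lemma rho_c4_bounds:
  fixes D :: real
  assumes D: "D \<ge> 2" and x: "2/D - 1/D/D \<le> x" "x < 2/D"
  shows "D * x - 2 + 2/D \<ge> 1/D" "D * x - 2 + 2/D < 2/D"
proof -
  have Dp: "D > 0" using D by simp
  have a: "D * x \<ge> D * (2/D - 1/D/D)" using x Dp by (simp add: mult_left_mono)
  have b: "D * (2/D - 1/D/D) = 2 - 1/D" using Dp by (simp add: field_simps)
  have c: "D * x < D * (2/D)" by (rule mult_strict_left_mono) (use x Dp in auto)
  have e: "D * (2/D) = 2" using Dp by simp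
  show "D * x - 2 + 2/D \<ge> 1/D" "D * x - 2 + 2/D < 2/D" using a b c e by linarith+
qed

lemma rhoi_c4_bounds:
  fixes D :: real
  assumes D: "D \<ge> 2" and y: "1/D \<le> y" "y < 2/D"
  shows "(y + 2 - 2/D) / D \<ge> 2/D - 1/D/D" "(y + 2 - 2/D) / D < 2/D" "D * ((y + 2 - 2/D) / D) = y + 2 - 2/D"
proof -
  have Dp: "D > 0" using D by simp
  have "(y + 2 - 2/D) / D \<ge> (1/D + 2 - 2/D) / D" using y Dp by (simp add: divide_right_mono)
  moreover have "(1/D + 2 - 2/D) / D = 2/D - 1/D/D" using Dp by (simp add: field_simps)
  ultimately show "(y + 2 - 2/D) / D \<ge> 2/D - 1/D/D" by linarith
  have "(y + 2 - 2/D) / D < (2/D + 2 - 2/D) / D" using y Dp by (simp add: divide_strict_right_mono)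
  thus "(y + 2 - 2/D) / D < 2/D" by simp
  show "D * ((y + 2 - 2/D) / D) = y + 2 - 2/D" using Dp by simp
qed

lemma rho_c2_bounds:
  fixes D :: real
  assumes D: "D \<ge> 2" and x: "0 \<le> x" "x < 1/D"
  shows "0 \<le> x / D" "x / D < 1/D/D"
proof -
  have Dp: "D > 0" using D by simp
  show "0 \<le> x / D" using x Dp by simp
  show "x / D < 1/D/D" by (rule divide_strict_right_mono) (use x Dp in auto)
qed

lemma rhoi_c2_bounds:
  fixes D :: real
  assumes D: "D \<ge> 2" and y: "0 \<le> y" "y < 1/D/D"
  shows "0 \<le> D * y" "D * y < 1/D"
proof -
  have Dp: "D > 0" using D by simp
  show "0 \<le> D * y" using y Dp by simp
  have "D * y < D * (1/D/D)" by (rule mult_strict_left_mono) (use y Dp in auto)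
  moreover have "D * (1/D/D) = 1/D" using Dp by simp
  ultimately show "D * y < 1/D" by linarith
qed

lemma rhoi_rho:
  fixes D :: real
  assumes D: "D \<ge> 2"
  shows "rhoi D (rho D x) = x"
proof -
  note f = rho_facts[OF D]
  have Dp: "D > 0" using D by simp
  consider "x < 0" | "0 \<le> x" "x < 1/D" | "1/D \<le> x" "x < 2/D - 1/D/D" | "2/D - 1/D/D \<le> x" "x < 2/D" | "2/D \<le> x"
    by linarith
  thus ?thesis
  proof cases
    case 1 thus ?thesis using rho_c1 rhoi_c1 by simp
  next
    case 2
    note b = rho_c2_bounds[OF D 2]
    have "rho D x = x / D" using 2 by (intro rho_c2) linarith+
    moreover have "rhoi D (x / D) = D * (x / D)" using b by (intro rhoi_c2) linarith+
    ultimately show ?thesis using Dp by simp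
  next
    case 3
    have "rho D x = x - 1/D + 1/D/D" using 3 f by (intro rho_c3) linarith+
    moreover have "rhoi D (x - 1/D + 1/D/D) = (x - 1/D + 1/D/D) + 1/D - 1/D/D" using 3 f by (intro rhoi_c3) linarith+
    ultimately show ?thesis by simp
  next
    case 4
    note b = rho_c4_bounds[OF D 4]
    have "rho D x = D * x - 2 + 2/D" using 4 f by (intro rho_c4) linarith+
    moreover have "rhoi D (D * x - 2 + 2/D) = (D * x - 2 + 2/D + 2 - 2/D) / D" using b f by (intro rhoi_c4) linarith+
    ultimately show ?thesis using Dp by simp
  next
    case 5
    have "rho D x = x" using 5 f by (intro rho_c5) linarith+
    moreover have "rhoi D x = x" using 5 f by (intro rhoi_c5) linarith+
    ultimately show ?thesis by simp
  qed
qed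

lemma rho_rhoi:
  fixes D :: real
  assumes D: "D \<ge> 2"
  shows "rho D (rhoi D y) = y"
proof -
  note f = rho_facts[OF D]
  have Dp: "D > 0" using D by simp
  consider "y < 0" | "0 \<le> y" "y < 1/D/D" | "1/D/D \<le> y" "y < 1/D" | "1/D \<le> y" "y < 2/D" | "2/D \<le> y"
    by linarith
  thus ?thesis
  proof cases
    case 1 thus ?thesis using rho_c1 rhoi_c1 by simp
  next
    case 2
    note b = rhoi_c2_bounds[OF D 2]
    have "rhoi D y = D * y" using 2 by (intro rhoi_c2) linarith+
    moreover have "rho D (D * y) = (D * y) / D" using b by (intro rho_c2) linarith+
    ultimately show ?thesis using Dp by simp
  next
    case 3
    have "rhoi D y = y + 1/D - 1/D/D" using 3 f by (intro rhoi_c3) linarith+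
    moreover have "rho D (y + 1/D - 1/D/D) = (y + 1/D - 1/D/D) - 1/D + 1/D/D" using 3 f by (intro rho_c3) linarith+
    ultimately show ?thesis by simp
  next
    case 4
    note b = rhoi_c4_bounds[OF D 4]
    have "rhoi D y = (y + 2 - 2/D) / D" using 4 f by (intro rhoi_c4) linarith+
    moreover have "rho D ((y + 2 - 2/D) / D) = D * ((y + 2 - 2/D) / D) - 2 + 2/D" using b f by (intro rho_c4) linarith+
    ultimately show ?thesis using b(3) by simp
  next
    case 5
    have "rhoi D y = y" using 5 f by (intro rhoi_c5) linarith+
    moreover have "rho D y = y" using 5 f by (intro rho_c5) linarith+
    ultimately show ?thesis by simp
  qed
qed

lemma rho_maps:
  fixes D :: real
  assumes D: "D \<ge> 2" and x: "0 \<le> x" "x < 1"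
  shows "0 \<le> rho D x \<and> rho D x < 1"
proof -
  note f = rho_facts[OF D]
  consider "x < 1/D" | "1/D \<le> x" "x < 2/D - 1/D/D" | "2/D - 1/D/D \<le> x" "x < 2/D" | "2/D \<le> x"
    by linarith
  thus ?thesis
  proof cases
    case 1
    note b = rho_c2_bounds[OF D x(1) 1]
    have "rho D x = x / D" using 1 x by (intro rho_c2) linarith+
    thus ?thesis using b f by linarith
  next
    case 2
    have "rho D x = x - 1/D + 1/D/D" using 2 f x by (intro rho_c3) linarith+
    thus ?thesis using 2 f by linarith
  next
    case 3
    note b = rho_c4_bounds[OF D 3]
    have "rho D x = D * x - 2 + 2/D" using 3 f x by (intro rho_c4) linarith+
    thus ?thesis using b f by linarith
  next
    case 4
    have "rho D x = x" using 4 f x by (intro rho_c5) linarith+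
    thus ?thesis using x by linarith
  qed
qed

lemma rhoi_maps:
  fixes D :: real
  assumes D: "D \<ge> 2" and y: "0 \<le> y" "y < 1"
  shows "0 \<le> rhoi D y \<and> rhoi D y < 1"
proof -
  note f = rho_facts[OF D]
  consider "y < 1/D/D" | "1/D/D \<le> y" "y < 1/D" | "1/D \<le> y" "y < 2/D" | "2/D \<le> y"
    by linarith
  thus ?thesis
  proof cases
    case 1
    note b = rhoi_c2_bounds[OF D y(1) 1]
    have "rhoi D y = D * y" using 1 y by (intro rhoi_c2) linarith+
    thus ?thesis using b f by linarith
  next
    case 2
    have "rhoi D y = y + 1/D - 1/D/D" using 2 f y by (intro rhoi_c3) linarith+
    thus ?thesis using 2 f by linarith
  next
    case 3
    note b = rhoi_c4_bounds[OF D 3]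
    have "rhoi D y = (y + 2 - 2/D) / D" using 3 f y by (intro rhoi_c4) linarith+
    thus ?thesis using b f by linarith
  next
    case 4
    have "rhoi D y = y" using 4 f y by (intro rhoi_c5) linarith+
    thus ?thesis using y by linarith
  qed
qed


lemma rho_bij0:
  assumes d: "d \<ge> 2"
  shows "bij0 (rho (real d))"
proof -
  have D: "real d \<ge> 2" using d by simp
  note f = rho_facts[OF D]
  have "bij_betw (rho (real d)) {0..<1} {0..<1}"
    by (rule bij_betw_byWitness[where f'="rhoi (real d)"])
       (use rhoi_rho[OF D] rho_rhoi[OF D] rho_maps[OF D] rhoi_maps[OF D] in auto)
  moreover have "\<forall>x. x \<notin> {0..<1} \<longrightarrow> rho (real d) x = x"
  proof (intro allI impI)
    fix x :: real assume "x \<notin> {0..<1}"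
    hence "x < 0 \<or> x \<ge> 1" by auto
    thus "rho (real d) x = x"
    proof
      assume "x < 0" thus ?thesis by (rule rho_c1)
    next
      assume "x \<ge> 1" thus ?thesis using f by (intro rho_c5) linarith+
    qed
  qed
  ultimately show ?thesis unfolding bij0_def by auto
qed

lemma rho_Vd:
  assumes d: "d \<ge> 2"
  shows "rho (real d) \<in> Vd d"
proof -
  have D: "real d \<ge> 2" using d by simp
  have Dp: "real d > 0" using d by simp
  note f = rho_facts[OF D]
  have b: "bij0 (rho (real d))" using rho_bij0[OF d] .
  have sq: "real d ^ 2 = real d * real d" by (simp add: power2_eq_square)
  have "U d (rho (real d))"
  proof (rule U_pieces[OF d b, of 2])
    fix k assume vk: "valid d 2 k"
    hence k0: "0 \<le> k" by (simp add: valid_def)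
    show "\<exists>(kk::int) bb. dadic d bb \<and> (\<forall>x\<in>sint d 2 k. rho (real d) x = real d powi kk * x + bb)"
    proof -
      have lo: "\<And>x. x \<in> sint d 2 k \<Longrightarrow> real_of_int k / (real d * real d) \<le> x"
        and hi: "\<And>x. x \<in> sint d 2 k \<Longrightarrow> x < (real_of_int k + 1) / (real d * real d)"
        unfolding sint_def sq by auto
      consider "k + 1 \<le> int d" | "int d \<le> k" "k + 1 \<le> 2 * int d - 1" | "k = 2 * int d - 1" | "2 * int d \<le> k"
        by linarith
      thus ?thesis
      proof cases
        case 1
        have "real_of_int (k + 1) \<le> real_of_int (int d)" using 1 by (simp only: of_int_le_iff)
        hence "real_of_int k + 1 \<le> real d" by simp
        hence "(real_of_int k + 1) / (real d * real d) \<le> real d / (real d * real d)" by (rule divide_right_mono) (use Dp in auto)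
        also have "\<dots> = 1 / real d" using Dp by simp
        finally have u: "(real_of_int k + 1) / (real d * real d) \<le> 1 / real d" .
        have "0 \<le> real_of_int k / (real d * real d)" using k0 Dp by simp
        hence l: "0 \<le> real_of_int k / (real d * real d)" .
        have "\<forall>x\<in>sint d 2 k. rho (real d) x = real d powi (-1) * x + real_of_int 0 / real d ^ 0"
        proof
          fix x assume x: "x \<in> sint d 2 k"
          have "rho (real d) x = x / real d"
            using lo[OF x] hi[OF x] l u by (intro rho_c2) linarith+
          thus "rho (real d) x = real d powi (-1) * x + real_of_int 0 / real d ^ 0"
            by (simp add: power_int_minus divide_inverse mult.commute)
        qed
        thus ?thesis unfolding dadic_def by blast
      next
        case 2
        have "real d \<le> real_of_int k" using 2 by simp
        hence "real d / (real d * real d) \<le> real_of_int k / (real d * real d)" by (rule divide_right_mono) (use Dp in auto)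
        moreover have "real d / (real d * real d) = 1 / real d" using Dp by simp
        ultimately have l: "1 / real d \<le> real_of_int k / (real d * real d)" by simp
        have "real_of_int (k + 1) \<le> real_of_int (2 * int d - 1)" using 2 by (simp only: of_int_le_iff)
        hence "real_of_int k + 1 \<le> 2 * real d - 1" by simp
        hence "(real_of_int k + 1) / (real d * real d) \<le> (2 * real d - 1) / (real d * real d)" by (rule divide_right_mono) (use Dp in auto)
        also have "\<dots> = 2 / real d - 1 / real d / real d" using Dp by (simp add: field_simps)
        finally have u: "(real_of_int k + 1) / (real d * real d) \<le> 2 / real d - 1 / real d / real d" .
        have "\<forall>x\<in>sint d 2 k. rho (real d) x = real d powi 0 * x + real_of_int (1 - int d) / real d ^ 2"
        proof
          fix x assume x: "x \<in> sint d 2 k"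
          have "rho (real d) x = x - 1 / real d + 1 / real d / real d"
            using lo[OF x] hi[OF x] l u f by (intro rho_c3) linarith+
          also have "\<dots> = real d powi 0 * x + real_of_int (1 - int d) / real d ^ 2" using Dp by (simp add: field_simps power2_eq_square)
          finally show "rho (real d) x = real d powi 0 * x + real_of_int (1 - int d) / real d ^ 2" .
        qed
        thus ?thesis unfolding dadic_def by blast
      next
        case 3
        have "real_of_int k = 2 * real d - 1" using 3 by simp
        hence l: "real_of_int k / (real d * real d) = 2 / real d - 1 / real d / real d"
          and u: "(real_of_int k + 1) / (real d * real d) = 2 / real d" using Dp by (simp_all add: field_simps)
        have "\<forall>x\<in>sint d 2 k. rho (real d) x = real d powi 1 * x + real_of_int (2 - 2 * int d) / real d ^ 1"
        proof
          fix x assume x: "x \<in> sint d 2 k"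
          have "rho (real d) x = real d * x - 2 + 2 / real d"
            using lo[OF x] hi[OF x] l u f by (intro rho_c4) linarith+
          also have "\<dots> = real d powi 1 * x + real_of_int (2 - 2 * int d) / real d ^ 1" using Dp by (simp add: field_simps)
          finally show "rho (real d) x = real d powi 1 * x + real_of_int (2 - 2 * int d) / real d ^ 1" .
        qed
        thus ?thesis unfolding dadic_def by blast
      next
        case 4
        have "2 * real d \<le> real_of_int k" using 4 by simp
        hence "2 * real d / (real d * real d) \<le> real_of_int k / (real d * real d)" by (rule divide_right_mono) (use Dp in auto)
        moreover have "2 * real d / (real d * real d) = 2 / real d" using Dp by simp
        ultimately have l: "2 / real d \<le> real_of_int k / (real d * real d)" by simp
        have "\<forall>x\<in>sint d 2 k. rho (real d) x = real d powi 0 * x + real_of_int 0 / real d ^ 0"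
        proof
          fix x assume x: "x \<in> sint d 2 k"
          show "rho (real d) x = real d powi 0 * x + real_of_int 0 / real d ^ 0"
            using lo[OF x] l f by (simp, intro rho_c5) linarith+
        qed
        thus ?thesis unfolding dadic_def by blast
      qed
    qed
  qed
  thus ?thesis using Vd_char[OF d] b by blast
qed


lemma I_eq: "sint d 1 0 = {0..<1/real d}" unfolding sint_def by simp

lemma rho_pow_Vd: "d \<ge> 2 \<Longrightarrow> (rho (real d) ^^ j) \<in> Vd d"
proof (induction j)
  case 0 thus ?case using id_Vd by (simp add: id_def)
next
  case (Suc j)
  have "rho (real d) \<circ> (rho (real d) ^^ j) \<in> Vd d" using comp_Vd[OF Suc(2) rho_Vd[OF Suc(2)] Suc(1)[OF Suc(2)]] .
  thus ?case by (simp only: funpow.simps(2))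
qed

lemma rho_pow_val:
  assumes d: "d \<ge> 2" and x: "0 \<le> x" "x < 1 / real d"
  shows "(rho (real d) ^^ j) x = x / real d ^ j"
proof (induction j)
  case 0 thus ?case by simp
next
  case (Suc j)
  have Dp: "real d > 0" "real d ^ j \<ge> 1" using d by auto
  have "x / real d ^ j \<le> x" using x Dp by (simp add: divide_le_eq mult_le_cancel_left1 mult.commute)
  hence "0 \<le> x / real d ^ j" "x / real d ^ j < 1 / real d" using x Dp by auto
  hence "rho (real d) (x / real d ^ j) = x / real d ^ j / real d" by (intro rho_c2) linarith+
  thus ?case using Suc by (simp add: mult.commute)
qed

definition Gmap :: "nat \<Rightarrow> nat \<Rightarrow> int \<Rightarrow> real \<Rightarrow> real" where
  "Gmap d n a = tau d n a \<circ> (rho (real d) ^^ (n - 1))"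

lemma Gmap_Vd: "d \<ge> 2 \<Longrightarrow> valid d n a \<Longrightarrow> Gmap d n a \<in> Vd d"
  unfolding Gmap_def using comp_Vd tau_Vd rho_pow_Vd by blast

lemma Gmap_SA:
  assumes d: "d \<ge> 2" and n: "n \<ge> 1"
  shows "SA d (Gmap d n a) 1 0 n a"
  unfolding SA_def
proof
  fix x assume "x \<in> sint d 1 0"
  hence x: "0 \<le> x" "x < 1 / real d" unfolding I_eq by auto
  have Dp: "real d > 0" using d by simp
  obtain m where m: "n = m + 1" using n by (metis add.commute le_Suc_ex)
  have r: "(rho (real d) ^^ (n - 1)) x = x / real d ^ m" using rho_pow_val[OF d x] m by simp
  have "x / real d ^ m < 1 / real d / real d ^ m" by (rule divide_strict_right_mono) (use x Dp in auto)
  hence "x / real d ^ m \<in> sint d n 0" using x Dp m unfolding sint_def by (simp add: mult.commute)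
  hence "Gmap d n a x = x / real d ^ m + real_of_int a / real d ^ n" unfolding Gmap_def tau_def using r by simp
  also have "\<dots> = real_of_int a / real d ^ n + (x - real_of_int 0 / real d ^ 1) * (real d ^ 1 / real d ^ n)"
    using Dp m by (simp add: field_simps)
  finally show "Gmap d n a x = real_of_int a / real d ^ n + (x - real_of_int 0 / real d ^ 1) * (real d ^ 1 / real d ^ n)" .
qed


lemma Vsub_id: "d \<ge> 2 \<Longrightarrow> id \<in> Vsub d"
  unfolding Vsub_def using id_Vd by auto

lemma coset_self: "d \<ge> 2 \<Longrightarrow> g \<in> coset d g"
  unfolding coset_def using Vsub_id by (metis comp_id image_eqI)

lemma coset_agree:
  assumes "d \<ge> 2" "coset d a = coset d b" "x \<in> {0..<1/real d}"
  shows "a x = b x"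
proof -
  have "a \<in> coset d b" using coset_self[OF assms(1)] assms(2) by metis
  then obtain h where "h \<in> Vsub d" "a = b \<circ> h" unfolding coset_def by auto
  thus ?thesis using assms(3) unfolding Vsub_def by auto
qed

lemma coset_sub_agree:
  assumes d: "d \<ge> 2" and a: "a \<in> Vd d" and b: "b \<in> Vd d" and ag: "\<forall>x\<in>{0..<1/real d}. a x = b x"
  shows "coset d a \<subseteq> coset d b"
proof
  fix c assume "c \<in> coset d a"
  then obtain h where h: "h \<in> Vsub d" "c = a \<circ> h" unfolding coset_def by auto
  have bb: "bij b" using bij0_bij Vd_bij0 b by blast
  define h' where "h' = inv b \<circ> a \<circ> h"
  have "h' \<in> Vd d" unfolding h'_def using comp_Vd[OF d] inv_Vd[OF d b] a h(1) unfolding Vsub_def by blast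
  moreover have "\<forall>x \<in> {0..<1/real d}. h' x = x"
  proof
    fix x assume x: "x \<in> {0..<1/real d}"
    have "h x = x" using h(1) x unfolding Vsub_def by auto
    thus "h' x = x" unfolding h'_def using ag x bb by (simp add: bij_is_inj)
  qed
  ultimately have "h' \<in> Vsub d" unfolding Vsub_def by auto
  moreover have "b \<circ> h' = c" unfolding h'_def h(2) using bb by (simp add: fun_eq_iff bij_inv_eq_iff surj_f_inv_f bij_is_surj)
  ultimately show "c \<in> coset d b" unfolding coset_def by auto
qed

lemma agree_coset:
  assumes d: "d \<ge> 2" and a: "a \<in> Vd d" and b: "b \<in> Vd d" and ag: "\<forall>x\<in>{0..<1/real d}. a x = b x"
  shows "coset d a = coset d b"
  using coset_sub_agree[OF d a b ag] coset_sub_agree[OF d b a] ag by auto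

lemma act_coset: "act v (coset d g) = coset d (v \<circ> g)"
  unfolding act_def coset_def by (auto simp: image_image o_assoc)

lemma act_comp: "act v (act w C) = act (v \<circ> w) C"
  unfolding act_def by (auto simp: image_image o_assoc)

lemma act_id: "act id C = C"
  unfolding act_def by simp

lemma std_affine_cong:
  assumes "\<forall>x\<in>J. f x = g x" shows "std_affine d f J = std_affine d g J"
proof -
  have "f ` J = g ` J" using assms by (auto simp: image_def)
  thus ?thesis unfolding std_affine_def using assms by auto
qed

lemma SA_cong:
  assumes "\<forall>x\<in>sint d n a. f x = g x" shows "SA d f n a n' a' = SA d g n a n' a'"
  unfolding SA_def using assms by auto

lemma I_std_SA:
  assumes d: "d \<ge> 2" and g: "g \<in> Vd d" and sa: "std_affine d g {0..<1/real d}"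
  shows "\<exists>n a. 1 \<le> n \<and> valid d n a \<and> SA d g 1 0 n a"
proof -
  have d0: "d > 0" using d by simp
  obtain n a where na: "valid d n a" "SA d g 1 0 n a" using std_affine_SA[OF d0] sa I_eq by metis
  have "n \<noteq> 0"
  proof
    assume n0: "n = 0"
    hence a0: "a = 0" using na unfolding valid_def by simp
    have im: "g ` {0..<1/real d} = {0..<1}" using SA_image[OF d0 na(2)] n0 a0 I_eq unfolding sint_def by simp
    have "1/real d \<in> {0..<1}" using d by auto
    hence "g (1/real d) \<in> {0..<1}" using bij0_maps[OF Vd_bij0[OF g]] by blast
    then obtain x where x: "x \<in> {0..<1/real d}" "g x = g (1/real d)" using im by (metis imageE)
    have "inj g" using bij0_bij[OF Vd_bij0[OF g]] bij_is_inj by blast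
    hence "x = 1/real d" using x(2) by (simp add: inj_eq)
    thus False using x(1) by simp
  qed
  hence "1 \<le> n" by simp
  thus ?thesis using na by blast
qed

lemma R1:
  assumes d0: "d > 0" and g: "SA d g 1 0 n a" and v: "std_affine d v (sint d n a)"
  shows "std_affine d (v \<circ> g) {0..<1/real d}"
proof -
  obtain n' a' where "valid d n' a'" "SA d v n a n' a'" using std_affine_SA[OF d0 v] by blast
  thus ?thesis using SA_std_affine[OF d0 SA_comp[OF d0 g]] I_eq by metis
qed

lemma R2:
  assumes d0: "d > 0" and g: "SA d g 1 0 n a" and ig: "inj g" and v: "std_affine d (v \<circ> g) {0..<1/real d}"
  shows "std_affine d v (sint d n a)"
proof -
  obtain n' a' where va: "valid d n' a'" and s1: "SA d (v \<circ> g) 1 0 n' a'" using std_affine_SA[OF d0] v I_eq by metis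
  have s2: "SA d (inv g) n a 1 0" using SA_inv[OF d0 g ig] .
  have s3: "SA d ((v \<circ> g) \<circ> inv g) n a n' a'" using SA_comp[OF d0 s2 s1] .
  have "\<forall>y\<in>sint d n a. ((v \<circ> g) \<circ> inv g) y = v y"
  proof
    fix y assume "y \<in> sint d n a"
    then obtain w where "y = g w" using SA_image[OF d0 g] by blast
    thus "((v \<circ> g) \<circ> inv g) y = v y" using ig by simp
  qed
  hence "SA d v n a n' a'" using s3 SA_cong by blast
  thus ?thesis using SA_std_affine[OF d0 _ va] by blast
qed


definition badset :: "nat \<Rightarrow> (real \<Rightarrow> real) \<Rightarrow> (nat \<times> int) set" where
  "badset d v = {(n,a). 1 \<le> n \<and> valid d n a \<and> \<not> std_affine d v (sint d n a)}"

lemma Gmap_std: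
  assumes d: "d \<ge> 2" and n: "1 \<le> n" and v: "valid d n a"
  shows "std_affine d (Gmap d n a) {0..<1/real d}"
  using SA_std_affine[of d "Gmap d n a" 1 0 n a] Gmap_SA[OF d n] v d I_eq by simp

lemma Gmap_X:
  assumes d: "d \<ge> 2" and n: "1 \<le> n" and v: "valid d n a"
  shows "coset d (Gmap d n a) \<in> Xset d"
  unfolding Xset_def using Gmap_std[OF assms] Gmap_Vd[OF d v] by blast

lemma Gmap_inj: "d \<ge> 2 \<Longrightarrow> valid d n a \<Longrightarrow> inj (Gmap d n a)"
  using Gmap_Vd bij0_bij Vd_bij0 bij_is_inj by blast

lemma SA_agree: "SA d g 1 0 n a \<Longrightarrow> SA d h 1 0 n a \<Longrightarrow> \<forall>x\<in>{0..<1/real d}. g x = h x"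
  unfolding SA_def I_eq[symmetric] by auto

lemma badset_finite:
  assumes d: "d \<ge> 2" and v: "v \<in> Vd d"
  shows "finite (badset d v)"
proof -
  have d0: "d > 0" using d by simp
  obtain L where L: "\<forall>n\<ge>L. \<forall>a. valid d n a \<longrightarrow> (\<exists>n' a'. n' \<ge> 0 \<and> valid d n' a' \<and> SA d v n a n' a')"
    using Vd_imp_U[OF d v] unfolding U_def by blast
  have "badset d v \<subseteq> Sigma {..<L} (\<lambda>n. {0..<int d ^ n})"
  proof
    fix p assume "p \<in> badset d v"
    then obtain n a where p: "p = (n,a)" "valid d n a" "\<not> std_affine d v (sint d n a)" unfolding badset_def by auto
    have "n < L"
    proof (rule ccontr)
      assume "\<not> n < L"
      then obtain n' a' where "valid d n' a'" "SA d v n a n' a'" using L p by (meson not_less)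
      thus False using SA_std_affine[OF d0] p by blast
    qed
    thus "p \<in> Sigma {..<L} (\<lambda>n. {0..<int d ^ n})" using p unfolding valid_def by auto
  qed
  thus ?thesis by (rule finite_subset) auto
qed

lemma X_Quot: "Xset d \<subseteq> Quot d"
  unfolding Xset_def Quot_def by auto

lemma Y_Quot:
  assumes d: "d \<ge> 2" and v: "v \<in> Vd d"
  shows "act v ` Xset d \<subseteq> Quot d"
  unfolding Xset_def Quot_def using act_coset comp_Vd[OF d v] by auto

lemma YX_sub:
  assumes d: "d \<ge> 2" and v: "v \<in> Vd d"
  shows "act v ` Xset d - Xset d \<subseteq> (\<lambda>(n,a). coset d (v \<circ> Gmap d n a)) ` badset d v"
proof
  have d0: "d > 0" using d by simp
  fix C assume C: "C \<in> act v ` Xset d - Xset d"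
  then obtain g where g: "g \<in> Vd d" "std_affine d g {0..<1/real d}" "C = coset d (v \<circ> g)"
    unfolding Xset_def using act_coset by auto
  obtain n a where na: "1 \<le> n" "valid d n a" "SA d g 1 0 n a" using I_std_SA[OF d g(1,2)] by blast
  have bad: "(n,a) \<in> badset d v"
  proof (rule ccontr)
    assume "(n,a) \<notin> badset d v"
    hence "std_affine d v (sint d n a)" using na unfolding badset_def by auto
    hence "std_affine d (v \<circ> g) {0..<1/real d}" using R1[OF d0 na(3)] by blast
    hence "C \<in> Xset d" using g comp_Vd[OF d v g(1)] unfolding Xset_def by blast
    thus False using C by blast
  qed
  have ag: "\<forall>x\<in>{0..<1/real d}. g x = Gmap d n a x" using SA_agree[OF na(3) Gmap_SA[OF d na(1)]] .
  have "C = coset d (v \<circ> Gmap d n a)"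
    unfolding g(3) by (rule agree_coset[OF d comp_Vd[OF d v g(1)] comp_Vd[OF d v Gmap_Vd[OF d na(2)]]]) (use ag in simp)
  thus "C \<in> (\<lambda>(n,a). coset d (v \<circ> Gmap d n a)) ` badset d v" using bad by force
qed

lemma XY_sub:
  assumes d: "d \<ge> 2" and v: "v \<in> Vd d"
  shows "Xset d - act v ` Xset d \<subseteq> (\<lambda>(n,a). coset d (Gmap d n a)) ` badset d (inv v)"
proof
  have d0: "d > 0" using d by simp
  have bv: "bij v" using bij0_bij Vd_bij0 v by blast
  fix C assume C: "C \<in> Xset d - act v ` Xset d"
  then obtain g where g: "g \<in> Vd d" "std_affine d g {0..<1/real d}" "C = coset d g"
    unfolding Xset_def by auto
  obtain n a where na: "1 \<le> n" "valid d n a" "SA d g 1 0 n a" using I_std_SA[OF d g(1,2)] by blast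
  have bad: "(n,a) \<in> badset d (inv v)"
  proof (rule ccontr)
    assume "(n,a) \<notin> badset d (inv v)"
    hence "std_affine d (inv v) (sint d n a)" using na unfolding badset_def by auto
    hence "std_affine d (inv v \<circ> g) {0..<1/real d}" using R1[OF d0 na(3)] by blast
    hence "coset d (inv v \<circ> g) \<in> Xset d" using g comp_Vd[OF d inv_Vd[OF d v] g(1)] unfolding Xset_def by blast
    moreover have "act v (coset d (inv v \<circ> g)) = C" unfolding act_coset g(3) using bv
    proof -
      have "v \<circ> (inv v \<circ> g) = g" using bv by (simp add: fun_eq_iff bij_is_surj surj_f_inv_f)
      thus "coset d (v \<circ> (inv v \<circ> g)) = coset d g" by simp
    qed
    ultimately show False using C by blast
  qed
  have ag: "\<forall>x\<in>{0..<1/real d}. g x = Gmap d n a x" using SA_agree[OF na(3) Gmap_SA[OF d na(1)]] .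
  have "C = coset d (Gmap d n a)"
    unfolding g(3) by (rule agree_coset[OF d g(1) Gmap_Vd[OF d na(2)]]) (use ag in simp)
  thus "C \<in> (\<lambda>(n,a). coset d (Gmap d n a)) ` badset d (inv v)" using bad by force
qed


lemma Gmap_image:
  assumes d: "d \<ge> 2" and n: "1 \<le> n"
  shows "Gmap d n a ` {0..<1/real d} = sint d n a"
  using SA_image[of d "Gmap d n a" 1 0 n a] Gmap_SA[OF d n] d I_eq by simp

lemma inj_bad1:
  assumes d: "d \<ge> 2" and v: "v \<in> Vd d"
  shows "inj_on (\<lambda>(n,a). coset d (v \<circ> Gmap d n a)) (badset d v)"
proof (rule inj_onI, clarify)
  fix n a m b assume p: "(n,a) \<in> badset d v" "(m,b) \<in> badset d v"
    and e: "coset d (v \<circ> Gmap d n a) = coset d (v \<circ> Gmap d m b)"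
  have iv: "inj v" using bij0_bij Vd_bij0 v bij_is_inj by blast
  have n: "1 \<le> n" "1 \<le> m" using p unfolding badset_def by auto
  have "\<forall>x\<in>{0..<1/real d}. Gmap d n a x = Gmap d m b x"
    using coset_agree[OF d e] iv by (simp add: inj_eq)
  hence "Gmap d n a ` {0..<1/real d} = Gmap d m b ` {0..<1/real d}" by (auto simp: image_def)
  hence "sint d n a = sint d m b" using Gmap_image[OF d n(1)] Gmap_image[OF d n(2)] by simp
  thus "n = m \<and> a = b" using sint_inj[OF d] by blast
qed

lemma inj_bad2:
  assumes d: "d \<ge> 2"
  shows "inj_on (\<lambda>(n,a). coset d (Gmap d n a)) (badset d w)"
proof (rule inj_onI, clarify)
  fix n a m b assume p: "(n,a) \<in> badset d w" "(m,b) \<in> badset d w"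
    and e: "coset d (Gmap d n a) = coset d (Gmap d m b)"
  have n: "1 \<le> n" "1 \<le> m" using p unfolding badset_def by auto
  have "\<forall>x\<in>{0..<1/real d}. Gmap d n a x = Gmap d m b x"
    using coset_agree[OF d e] by simp
  hence "Gmap d n a ` {0..<1/real d} = Gmap d m b ` {0..<1/real d}" by (auto simp: image_def)
  hence "sint d n a = sint d m b" using Gmap_image[OF d n(1)] Gmap_image[OF d n(2)] by simp
  thus "n = m \<and> a = b" using sint_inj[OF d] by blast
qed

lemma bad1_sub:
  assumes d: "d \<ge> 2" and v: "v \<in> Vd d"
  shows "(\<lambda>(n,a). coset d (v \<circ> Gmap d n a)) ` badset d v \<subseteq> act v ` Xset d - Xset d"
proof
  fix C assume "C \<in> (\<lambda>(n,a). coset d (v \<circ> Gmap d n a)) ` badset d v"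
  then obtain n a where p: "(n,a) \<in> badset d v" and C: "C = coset d (v \<circ> Gmap d n a)" by auto
  have d0: "d > 0" using d by simp
  have na: "1 \<le> n" "valid d n a" "\<not> std_affine d v (sint d n a)" using p unfolding badset_def by auto
  have "coset d (v \<circ> Gmap d n a) = act v (coset d (Gmap d n a))" by (simp add: act_coset)
  hence Y: "coset d (v \<circ> Gmap d n a) \<in> act v ` Xset d" using Gmap_X[OF d na(1,2)] by simp
  have "coset d (v \<circ> Gmap d n a) \<notin> Xset d"
  proof
    assume "coset d (v \<circ> Gmap d n a) \<in> Xset d"
    then obtain g where g: "g \<in> Vd d" "std_affine d g {0..<1/real d}" "coset d (v \<circ> Gmap d n a) = coset d g"
      unfolding Xset_def by auto
    have "\<forall>x\<in>{0..<1/real d}. (v \<circ> Gmap d n a) x = g x" using coset_agree[OF d g(3)] by blast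
    hence "std_affine d (v \<circ> Gmap d n a) {0..<1/real d}" using std_affine_cong g(2) by blast
    hence "std_affine d v (sint d n a)" using R2[OF d0 Gmap_SA[OF d na(1)] Gmap_inj[OF d na(2)]] by blast
    thus False using na by blast
  qed
  thus "C \<in> act v ` Xset d - Xset d" using Y C by blast
qed

lemma bad2_sub:
  assumes d: "d \<ge> 2" and v: "v \<in> Vd d"
  shows "(\<lambda>(n,a). coset d (Gmap d n a)) ` badset d (inv v) \<subseteq> Xset d - act v ` Xset d"
proof
  fix C assume "C \<in> (\<lambda>(n,a). coset d (Gmap d n a)) ` badset d (inv v)"
  then obtain n a where p: "(n,a) \<in> badset d (inv v)" and C: "C = coset d (Gmap d n a)" by auto
  have d0: "d > 0" using d by simp
  have bv: "bij v" using bij0_bij Vd_bij0 v by blast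
  have na: "1 \<le> n" "valid d n a" "\<not> std_affine d (inv v) (sint d n a)" using p unfolding badset_def by auto
  have X: "coset d (Gmap d n a) \<in> Xset d" using Gmap_X[OF d na(1,2)] .
  have "coset d (Gmap d n a) \<notin> act v ` Xset d"
  proof
    assume "coset d (Gmap d n a) \<in> act v ` Xset d"
    then obtain g where g: "g \<in> Vd d" "std_affine d g {0..<1/real d}" "coset d (Gmap d n a) = coset d (v \<circ> g)"
      unfolding Xset_def using act_coset by auto
    have "\<forall>x\<in>{0..<1/real d}. Gmap d n a x = v (g x)" using coset_agree[OF d g(3)] by simp
    hence "\<forall>x\<in>{0..<1/real d}. (inv v \<circ> Gmap d n a) x = g x" using bv by (simp add: bij_is_inj)
    hence "std_affine d (inv v \<circ> Gmap d n a) {0..<1/real d}" using std_affine_cong g(2) by blast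
    hence "std_affine d (inv v) (sint d n a)" using R2[OF d0 Gmap_SA[OF d na(1)] Gmap_inj[OF d na(2)]] by blast
    thus False using na by blast
  qed
  thus "C \<in> Xset d - act v ` Xset d" using X C by blast
qed


lemma act_inv_mem:
  assumes "bij v"
  shows "act (inv v) C \<in> A \<longleftrightarrow> C \<in> act v ` A"
proof -
  have vi: "v \<circ> inv v = id" "inv v \<circ> v = id" using assms
    by (simp_all add: fun_eq_iff bij_is_surj surj_f_inv_f bij_is_inj)
  have 1: "act v (act (inv v) C) = C" using vi by (simp add: act_comp act_id)
  have 2: "\<And>D. act (inv v) (act v D) = D" using vi by (simp add: act_comp act_id)
  show ?thesis
  proof
    assume "act (inv v) C \<in> A" thus "C \<in> act v ` A" using 1 by (metis image_eqI)
  next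
    assume "C \<in> act v ` A" thus "act (inv v) C \<in> A" using 2 by auto
  qed
qed

lemma cocycle_id:
  assumes d: "d \<ge> 2" and v1: "v1 \<in> Vd d" and v2: "v2 \<in> Vd d"
  shows "cocyc d (v1 \<circ> v2) = (\<lambda>C. qreg v1 (cocyc d v2) C + cocyc d v1 C)"
proof
  fix C
  have b: "bij v1" using bij0_bij Vd_bij0 v1 by blast
  have e: "act (v1 \<circ> v2) ` Xset d = act v1 ` (act v2 ` Xset d)" by (auto simp: act_comp image_image)
  have i1: "act (inv v1) C \<in> act v2 ` Xset d \<longleftrightarrow> C \<in> act (v1 \<circ> v2) ` Xset d"
    unfolding e using act_inv_mem[OF b] .
  have i2: "act (inv v1) C \<in> Xset d \<longleftrightarrow> C \<in> act v1 ` Xset d" using act_inv_mem[OF b] .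
  show "cocyc d (v1 \<circ> v2) C = qreg v1 (cocyc d v2) C + cocyc d v1 C"
    unfolding cocyc_def qreg_def indicator_def using i1 i2 by auto
qed

definition supp :: "nat \<Rightarrow> (real \<Rightarrow> real) \<Rightarrow> (real \<Rightarrow> real) set set" where
  "supp d v = (act v ` Xset d - Xset d) \<union> (Xset d - act v ` Xset d)"

lemma supp_finite:
  assumes d: "d \<ge> 2" and v: "v \<in> Vd d"
  shows "finite (supp d v)"
proof -
  have "finite (badset d v)" "finite (badset d (inv v))" using badset_finite[OF d] v inv_Vd[OF d v] by auto
  hence "finite ((\<lambda>(n,a). coset d (v \<circ> Gmap d n a)) ` badset d v)" "finite ((\<lambda>(n,a). coset d (Gmap d n a)) ` badset d (inv v))"
    by auto
  thus ?thesis unfolding supp_def using YX_sub[OF d v] XY_sub[OF d v] by (meson finite_Un finite_subset)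
qed

lemma cocyc_sq: "(cocyc d v C)\<^sup>2 = indicator (supp d v) C"
  unfolding cocyc_def supp_def indicator_def by auto

lemma supp_Quot: "d \<ge> 2 \<Longrightarrow> v \<in> Vd d \<Longrightarrow> supp d v \<subseteq> Quot d"
  unfolding supp_def using X_Quot Y_Quot by blast

lemma cocyc_out:
  assumes "d \<ge> 2" "v \<in> Vd d" "C \<notin> Quot d" shows "cocyc d v C = 0"
proof -
  have "C \<notin> Xset d" "C \<notin> act v ` Xset d" using X_Quot Y_Quot[OF assms(1,2)] assms(3) by blast+
  thus ?thesis unfolding cocyc_def by simp
qed

lemma l2_facts:
  assumes d: "d \<ge> 2" and v: "v \<in> Vd d"
  shows "in_l2 d (cocyc d v)" "l2norm d (cocyc d v) = sqrt (real (card (supp d v)))"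
proof -
  have f: "finite (supp d v)" using supp_finite[OF d v] .
  have s: "supp d v \<subseteq> Quot d" using supp_Quot[OF d v] .
  have eq: "\<And>C. (cocyc d v C)\<^sup>2 = indicator (supp d v) C" by (rule cocyc_sq)
  have "(\<lambda>C. (cocyc d v C)\<^sup>2) summable_on supp d v" using f by simp
  hence "(\<lambda>C. (cocyc d v C)\<^sup>2) summable_on Quot d"
    using summable_on_cong_neutral[of "supp d v" "Quot d" "\<lambda>C. (cocyc d v C)\<^sup>2" "\<lambda>C. (cocyc d v C)\<^sup>2"] s
    unfolding eq by (auto simp: indicator_def)
  thus "in_l2 d (cocyc d v)" unfolding in_l2_def using cocyc_out[OF d v] by auto
  have "infsum (\<lambda>C. (cocyc d v C)\<^sup>2) (Quot d) = infsum (\<lambda>C. (cocyc d v C)\<^sup>2) (supp d v)"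
    using infsum_cong_neutral[of "supp d v" "Quot d" "\<lambda>C. (cocyc d v C)\<^sup>2" "\<lambda>C. (cocyc d v C)\<^sup>2"] s
    unfolding eq by (auto simp: indicator_def)
  also have "\<dots> = (\<Sum>C\<in>supp d v. (cocyc d v C)\<^sup>2)" using f by simp
  also have "\<dots> = real (card (supp d v))" unfolding eq by simp
  finally show "l2norm d (cocyc d v) = sqrt (real (card (supp d v)))" unfolding l2norm_def by simp
qed

lemma card_bad_le:
  assumes d: "d \<ge> 2" and v: "v \<in> Vd d"
  shows "card (badset d v) + card (badset d (inv v)) \<le> card (supp d v)"
proof -
  have f: "finite (supp d v)" using supp_finite[OF d v] .
  have f1: "finite (act v ` Xset d - Xset d)" "finite (Xset d - act v ` Xset d)" using f unfolding supp_def by auto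
  have "card (badset d v) \<le> card (act v ` Xset d - Xset d)"
    using card_inj_on_le[OF inj_bad1[OF d v] bad1_sub[OF d v] f1(1)] .
  moreover have "card (badset d (inv v)) \<le> card (Xset d - act v ` Xset d)"
    using card_inj_on_le[OF inj_bad2[OF d] bad2_sub[OF d v] f1(2)] .
  moreover have "card (supp d v) = card (act v ` Xset d - Xset d) + card (Xset d - act v ` Xset d)"
    unfolding supp_def using f1 by (intro card_Un_disjoint) auto
  ultimately show ?thesis by simp
qed


lemma descent:
  assumes d: "d \<ge> 2" and b: "bij0 v" and sa: "std_affine d v (sint d j k)"
    and sub: "sint d m a \<subseteq> sint d j k" and jm: "j \<le> m" and va: "valid d m a"
  shows "std_affine d v (sint d m a)"
proof -
  have d0: "d > 0" using d by simp
  obtain n' a' where "valid d n' a'" "SA d v j k n' a'" using std_affine_SA[OF d0 sa] by blast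
  obtain i where i: "m = j + i" using jm le_Suc_ex by blast
  have "SA d v m a (n' + i) (a' * int d ^ i + a - k * int d ^ i)"
    using SA_sub[OF d0 \<open>SA d v j k n' a'\<close>, of i a] sub i by simp
  moreover have "valid d (n' + i) (a' * int d ^ i + a - k * int d ^ i)"
    using SA_valid[OF d0 calculation va bij0_maps[OF b]] .
  ultimately show ?thesis using SA_std_affine[OF d0] by blast
qed

lemma no_bad_level:
  assumes d: "d \<ge> 2" and b: "bij0 v" and fin: "finite (badset d v)" and c: "card (badset d v) < m"
    and va: "valid d m a"
  shows "std_affine d v (sint d m a)"
proof (rule ccontr)
  assume nb: "\<not> std_affine d v (sint d m a)"
  have d0: "d > 0" using d by simp
  define k where "k = (\<lambda>j. SOME k. valid d j k \<and> sint d m a \<subseteq> sint d j k)"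
  have kj: "\<And>j. j \<le> m \<Longrightarrow> valid d j (k j) \<and> sint d m a \<subseteq> sint d j (k j)"
    unfolding k_def using ancestor[OF d0 va] by (metis (mono_tags, lifting) someI_ex)
  have "(\<lambda>j. (j, k j)) ` {1..m} \<subseteq> badset d v"
  proof
    fix p assume "p \<in> (\<lambda>j. (j, k j)) ` {1..m}"
    then obtain j where j: "j \<in> {1..m}" "p = (j, k j)" by auto
    have "\<not> std_affine d v (sint d j (k j))"
      using descent[OF d b _ _ _ va] kj[of j] j nb by auto
    thus "p \<in> badset d v" using j kj[of j] unfolding badset_def by auto
  qed
  hence "card ((\<lambda>j. (j, k j)) ` {1..m}) \<le> card (badset d v)" using fin by (rule card_mono[rotated])
  moreover have "card ((\<lambda>j. (j, k j)) ` {1..m}) = m" by (subst card_image) (auto simp: inj_on_def)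
  ultimately show False using c by simp
qed

lemma diff_lin: "(u2::real) = A + (x2 - B) * s \<Longrightarrow> u1 = A + (x1 - B) * s \<Longrightarrow> u2 - u1 = (x2 - x1) * s"
  by (simp add: algebra_simps)

lemma level_bound:
  assumes d: "d \<ge> 2" and v: "v \<in> Vd d" and va: "valid d m a" and sa: "SA d v m a l a'" and vl: "valid d l a'"
    and good: "\<And>c. valid d m c \<Longrightarrow> std_affine d (inv v) (sint d m c)"
  shows "l \<le> 2 * m"
proof (cases "l \<le> m")
  case True thus ?thesis by simp
next
  case False
  have d0: "d > 0" using d by simp
  have bv: "bij v" using bij0_bij Vd_bij0 v by blast
  obtain c where c: "valid d m c" "sint d l a' \<subseteq> sint d m c" using ancestor[OF d0 vl, of m] False by auto
  obtain p c' where "valid d p c'" and sb: "SA d (inv v) m c p c'" using std_affine_SA[OF d0 good[OF c(1)]] by blast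
  define x1 where "x1 = real_of_int a / real d ^ m"
  define x2 where "x2 = real_of_int a / real d ^ m + 1 / (2 * real d ^ m)"
  have x: "x1 \<in> sint d m a" "x2 \<in> sint d m a" unfolding x1_def x2_def using sint_left[OF d0] sint_mid[OF d0] by auto
  have z: "v x1 \<in> sint d m c" "v x2 \<in> sint d m c" using SA_image[OF d0 sa] x c(2) by auto
  have iv: "inv v (v x1) = x1" "inv v (v x2) = x2" using bv by (simp_all add: bij_is_inj)
  have e1: "v x2 - v x1 = (x2 - x1) * (real d ^ m / real d ^ l)" using sa x unfolding SA_def by (intro diff_lin) auto
  have a2: "inv v (v x2) = real_of_int c' / real d ^ p + (v x2 - real_of_int c / real d ^ m) * (real d ^ m / real d ^ p)"
    using sb z(2) unfolding SA_def by blast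
  have a1: "inv v (v x1) = real_of_int c' / real d ^ p + (v x1 - real_of_int c / real d ^ m) * (real d ^ m / real d ^ p)"
    using sb z(1) unfolding SA_def by blast
  have e2: "x2 - x1 = (v x2 - v x1) * (real d ^ m / real d ^ p)" using diff_lin[OF a2[unfolded iv] a1[unfolded iv]] .
  have ne: "x2 - x1 \<noteq> 0" unfolding x1_def x2_def using d0 by simp
  have "x2 - x1 = ((x2 - x1) * (real d ^ m / real d ^ l)) * (real d ^ m / real d ^ p)" using e2 unfolding e1 .
  hence "x2 - x1 = (x2 - x1) * ((real d ^ m / real d ^ l) * (real d ^ m / real d ^ p))" by (simp only: mult.assoc)
  hence "(real d ^ m / real d ^ l) * (real d ^ m / real d ^ p) = 1" using ne by (metis mult.right_neutral mult_left_cancel)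
  hence "real d ^ m * real d ^ m = real d ^ l * real d ^ p" using d0 by (simp add: field_simps)
  hence "real d ^ (m + m) = real d ^ (l + p)" by (simp add: power_add)
  moreover have "1 < real d" using d by simp
  ultimately have "m + m = l + p" using power_inject_exp by blast
  thus ?thesis by simp
qed


definition Pset :: "nat \<Rightarrow> nat \<Rightarrow> (real \<Rightarrow> real) set" where
  "Pset d m = {v \<in> Vd d. (\<forall>a. valid d m a \<longrightarrow> std_affine d v (sint d m a)) \<and>
                          (\<forall>a. valid d m a \<longrightarrow> std_affine d (inv v) (sint d m a))}"

lemma Pset_finite:
  assumes d: "d \<ge> 2"
  shows "finite (Pset d m)"
proof -
  have d0: "d > 0" using d by simp
  define Phi where "Phi = (\<lambda>v::real\<Rightarrow>real. restrict (\<lambda>a. v ` sint d m a) {0..<int d ^ m})"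
  define T where "T = (\<lambda>(n,a). sint d n a) ` Sigma {..2*m} (\<lambda>n. {0..<int d ^ n})"
  have fT: "finite T" unfolding T_def by auto
  have img: "\<And>v a. v \<in> Pset d m \<Longrightarrow> valid d m a \<Longrightarrow> \<exists>l a'. valid d l a' \<and> SA d v m a l a' \<and> l \<le> 2 * m"
  proof -
    fix v a assume v: "v \<in> Pset d m" and va: "valid d m a"
    obtain l a' where la: "valid d l a'" "SA d v m a l a'"
      using std_affine_SA[OF d0] v va unfolding Pset_def by blast
    have "l \<le> 2 * m" using level_bound[OF d _ va la(2) la(1)] v unfolding Pset_def by blast
    thus "\<exists>l a'. valid d l a' \<and> SA d v m a l a' \<and> l \<le> 2 * m" using la by blast
  qed
  have "Phi ` Pset d m \<subseteq> (\<Pi>\<^sub>E a \<in> {0..<int d ^ m}. T)"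
  proof
    fix F assume "F \<in> Phi ` Pset d m"
    then obtain v where v: "v \<in> Pset d m" "F = Phi v" by auto
    show "F \<in> (\<Pi>\<^sub>E a \<in> {0..<int d ^ m}. T)"
    proof (unfold v(2) Phi_def, rule restrict_PiE_iff[THEN iffD2], intro ballI)
      fix a assume "a \<in> {0..<int d ^ m}"
      hence va: "valid d m a" unfolding valid_def by auto
      obtain l a' where la: "valid d l a'" "SA d v m a l a'" "l \<le> 2 * m" using img[OF v(1) va] by blast
      have e: "v ` sint d m a = sint d l a'" using SA_image[OF d0 la(2)] .
      have m: "(l, a') \<in> Sigma {..2*m} (\<lambda>n. {0..<int d ^ n})" using la(1,3) unfolding valid_def by simp
      show "v ` sint d m a \<in> T" unfolding T_def e by (rule image_eqI[OF _ m]) simp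
    qed
  qed
  moreover have "inj_on Phi (Pset d m)"
  proof (rule inj_onI)
    fix v w assume v: "v \<in> Pset d m" and w: "w \<in> Pset d m" and e: "Phi v = Phi w"
    have bv: "bij0 v" "bij0 w" using v w Vd_bij0 unfolding Pset_def by auto
    show "v = w"
    proof
      fix x
      show "v x = w x"
      proof (cases "x \<in> {0..<1}")
        case False thus ?thesis using bv unfolding bij0_def by auto
      next
        case True
        define a where "a = \<lfloor>x * real d ^ m\<rfloor>"
        have xa: "x \<in> sint d m a" "valid d m a" using sint_point[OF d0, of x m] True unfolding a_def valid_def by auto
        have "a \<in> {0..<int d ^ m}" using xa unfolding valid_def by auto
        hence ee: "v ` sint d m a = w ` sint d m a" using fun_cong[OF e, of a] unfolding Phi_def by simp
        obtain l1 a1 where 1: "valid d l1 a1" "SA d v m a l1 a1" using img[OF v xa(2)] by blast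
        obtain l2 a2 where 2: "valid d l2 a2" "SA d w m a l2 a2" using img[OF w xa(2)] by blast
        have "sint d l1 a1 = sint d l2 a2" using ee SA_image[OF d0 1(2)] SA_image[OF d0 2(2)] by simp
        hence "l1 = l2" "a1 = a2" using sint_inj[OF d] by blast+
        thus ?thesis using 1(2) 2(2) xa(1) unfolding SA_def by simp
      qed
    qed
  qed
  moreover have "finite (\<Pi>\<^sub>E a \<in> {0..<int d ^ m}. T)" using fT by (intro finite_PiE) auto
  ultimately show ?thesis using inj_on_finite by blast
qed

lemma proper_Vd:
  assumes d: "d \<ge> 2"
  shows "finite {v \<in> Vd d. l2norm d (cocyc d v) \<le> r}"
proof -
  define m where "m = nat \<lceil>r\<^sup>2\<rceil> + 1"
  have "{v \<in> Vd d. l2norm d (cocyc d v) \<le> r} \<subseteq> Pset d m"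
  proof
    fix v assume "v \<in> {v \<in> Vd d. l2norm d (cocyc d v) \<le> r}"
    hence v: "v \<in> Vd d" and le: "sqrt (real (card (supp d v))) \<le> r" using l2_facts[OF d] by auto
    have sq0: "0 \<le> sqrt (real (card (supp d v)))" by simp
    have "(sqrt (real (card (supp d v))))\<^sup>2 \<le> r\<^sup>2" by (rule power_mono[OF le sq0])
    hence "real (card (supp d v)) \<le> r\<^sup>2" by simp
    also have "\<dots> < real m"
    proof -
      have "r\<^sup>2 \<le> real_of_int \<lceil>r\<^sup>2\<rceil>" by (rule le_of_int_ceiling)
      moreover have "real_of_int \<lceil>r\<^sup>2\<rceil> \<le> real (nat \<lceil>r\<^sup>2\<rceil>)" by simp
      moreover have "real m = real (nat \<lceil>r\<^sup>2\<rceil>) + 1" unfolding m_def by simp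
      ultimately show ?thesis by linarith
    qed
    finally have cs: "card (supp d v) < m" by simp
    have iv: "inv v \<in> Vd d" using inv_Vd[OF d v] .
    have c1: "card (badset d v) < m" and c2: "card (badset d (inv v)) < m" using card_bad_le[OF d v] cs by auto
    have "\<forall>a. valid d m a \<longrightarrow> std_affine d v (sint d m a)"
      using no_bad_level[OF d Vd_bij0[OF v] badset_finite[OF d v] c1] by blast
    moreover have "\<forall>a. valid d m a \<longrightarrow> std_affine d (inv v) (sint d m a)"
      using no_bad_level[OF d Vd_bij0[OF iv] badset_finite[OF d iv] c2] by blast
    ultimately show "v \<in> Pset d m" unfolding Pset_def using v by blast
  qed
  thus ?thesis using Pset_finite[OF d] finite_subset by blast
qed

theorem theorem5p5:
  fixes d :: nat
  assumes "d \<ge> 2"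
  shows "(\<forall>v \<in> Vd d. in_l2 d (cocyc d v))
    \<and> (\<forall>v1 \<in> Vd d. \<forall>v2 \<in> Vd d.
          cocyc d (v1 \<circ> v2) = (\<lambda>C. qreg v1 (cocyc d v2) C + cocyc d v1 C))
    \<and> (\<forall>r::real. finite {v \<in> Vd d. l2norm d (cocyc d v) \<le> r})
    \<and> (\<forall>r::real. finite {v \<in> Td d. l2norm d (cocyc d v) \<le> r})
    \<and> (\<forall>r::real. finite {v \<in> Fd d. l2norm d (cocyc d v) \<le> r})"
proof (intro conjI allI ballI)
  show "\<And>v. v \<in> Vd d \<Longrightarrow> in_l2 d (cocyc d v)" using l2_facts[OF assms] by blast
  show "\<And>v1 v2. v1 \<in> Vd d \<Longrightarrow> v2 \<in> Vd d \<Longrightarrow> cocyc d (v1 \<circ> v2) = (\<lambda>C. qreg v1 (cocyc d v2) C + cocyc d v1 C)"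
    using cocycle_id[OF assms] by blast
  fix r :: real
  show "finite {v \<in> Vd d. l2norm d (cocyc d v) \<le> r}" using proper_Vd[OF assms] .
  show "finite {v \<in> Td d. l2norm d (cocyc d v) \<le> r}"
    by (rule finite_subset[OF _ proper_Vd[OF assms, of r]]) (auto simp: Td_def)
  show "finite {v \<in> Fd d. l2norm d (cocyc d v) \<le> r}"
    by (rule finite_subset[OF _ proper_Vd[OF assms, of r]]) (auto simp: Fd_def)
qed


end
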